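(* Let $V$ be a vertex operator algebra of central charge $C$ as described in the context, with $d=\dim V^{(1)}>0$, basis $\{u_\alpha\}$ of $V^{(1)}$ and dual basis $\{u^\alpha\}$ ($\langle u^\alpha,u_\beta\rangle=\delta^\alpha_\beta$). For $a,b\in V^{(1)}$ let $F(a,b;x,y)=\sum_\alpha\langle a,Y(u^\alpha,x)Y(u_\alpha,y)b\rangle$, which is (the expansion in $|x|>|y|$ of) a rational function $G(a,b;x,y)/(x^2y^2(x-y)^2)$ with $G$ a homogeneous symmetric polynomial of degree $4$ in $x,y$, written as $$G(a,b;x,y)=P(a,b)x^2y^2+Q(a,b)xy(x-y)^2+R(a,b)(x-y)^4.$$ Then $$P(a,b)=-d\langle a,b\rangle,\qquad Q(a,b)=K(a,b)-2\langle a,b\rangle,\qquad R(a,b)=-\langle a,b\rangle,$$ where $K(a,b)=\mathrm{Tr}_{V^{(1)}}(a_0b_0)$.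
   Context: A vertex operator algebra (VOA) $V=\bigoplus_{k\ge0}V^{(k)}$ is $\mathbb Z$-graded with $\dim V^{(k)}<\infty$, $V^{(0)}=\mathbb C\mathbf 1$, and for each $a\in V^{(k)}$ a vertex operator $Y(a,z)=\sum_{n\in\mathbb Z}a_nz^{-n-k}$ with $a_{-k}\mathbf 1=a$, $Y(\mathbf 1,z)=\mathrm{Id}_V$; there is a conformal vector $\omega\in V^{(2)}$ with $Y(\omega,z)=\sum_nL_nz^{-n-2}$, the $L_n$ satisfying the Virasoro algebra of central charge $C$, $L_0$ acting on $V^{(k)}$ as $k$, $Y(L_{-1}a,z)=\partial_zY(a,z)$, and locality holds. It is assumed that $L_1v=0$ for all $v\in V^{(1)}$ and that $V$ carries the Li–Zamolodchikov metric: the unique symmetric invariant bilinear form with $\langle\mathbf 1,\mathbf 1\rangle=1$ and $\langle Y(e^{zL_1}(-z^{-2})^{L_0}c,1/z)a,b\rangle=\langle a,Y(c,z)b\rangle$ for all $a,b,c\in V$, assumed non-degenerate. $V^{(1)}$ is a Lie algebra under $[a,b]=a_0b$, and $K$ is its Killing form $K(a,b)=\mathrm{Tr}_{V^{(1)}}(\mathrm{ad}(a)\mathrm{ad}(b))$, $\mathrm{ad}(a)=a_0|_{V^{(1)}}$. *)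

theory Defs
  imports Complex_Main
begin

text \<open>Vertex operators are
given by their modes in the standard (weight-independent) indexing
  Y(a,z) = sum_n a_(n) z^(-n-1),   md a n = a_(n).
For a of weight k the paper's modes are a_n = a_(n+k-1); for k = 1 both agree.\<close>

definition wt_space :: "(complex \<Rightarrow> 'v \<Rightarrow> 'v) \<Rightarrow> ('v \<Rightarrow> 'v) \<Rightarrow> int \<Rightarrow> 'v set" where
  "wt_space sc L0 k = {v. L0 v = sc (of_int k) v}"

definition Vir :: "('v \<Rightarrow> int \<Rightarrow> 'v \<Rightarrow> 'v) \<Rightarrow> 'v \<Rightarrow> int \<Rightarrow> 'v \<Rightarrow> 'v" where
  "Vir md om n = md om (n + 1)"

definition is_VOA ::
  "(complex \<Rightarrow> 'v::ab_group_add \<Rightarrow> 'v) \<Rightarrow> ('v \<Rightarrow> int \<Rightarrow> 'v \<Rightarrow> 'v) \<Rightarrow> 'v \<Rightarrow> 'v \<Rightarrow> complex \<Rightarrow> bool"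
  where
  "is_VOA sc md one om C \<longleftrightarrow>
     vector_space sc \<and>
     \<comment> \<open>bilinearity of the modes\<close>
     (\<forall>a n. Vector_Spaces.linear sc sc (md a n)) \<and>
     (\<forall>n b. Vector_Spaces.linear sc sc (\<lambda>a. md a n b)) \<and>
     \<comment> \<open>truncation: Y(a,z)b has finitely many negative powers\<close>
     (\<forall>a b. \<exists>N. \<forall>n\<ge>N. md a n b = 0) \<and>
     \<comment> \<open>vacuum: Y(1,z) = Id, Y(a,z)1 = a + O(z)\<close>
     (\<forall>n v. md one n v = (if n = -1 then v else 0)) \<and>
     (\<forall>a. md a (-1) one = a) \<and>
     (\<forall>a n. n \<ge> 0 \<longrightarrow> md a n one = 0) \<and>
     \<comment> \<open>locality: (x-y)^N [Y(a,x),Y(b,y)] = 0, coefficientwise\<close>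
     (\<forall>a b. \<exists>N::nat. \<forall>m n c.
        (\<Sum>i\<le>N. sc ((-1)^i * of_nat (N choose i))
           (md a (m + int N - int i) (md b (n + int i) c)
            - md b (n + int i) (md a (m + int N - int i) c))) = 0) \<and>
     \<comment> \<open>conformal vector of weight 2 and the Virasoro algebra of central charge C\<close>
     om \<in> wt_space sc (Vir md om 0) 2 \<and>
     (\<forall>m n v. Vir md om m (Vir md om n v) - Vir md om n (Vir md om m v)
        = sc (of_int (m - n)) (Vir md om (m + n) v)
          + sc (if m + n = 0 then (of_int m ^ 3 - of_int m) / 12 * C else 0) v) \<and>
     \<comment> \<open>L_{-1}-derivative property and L_{-1}-, L_0-commutators\<close>
     (\<forall>a n v. md (Vir md om (-1) a) n v = sc (- of_int n) (md a (n - 1) v)) \<and>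
     (\<forall>a n v. Vir md om (-1) (md a n v) - md a n (Vir md om (-1) v)
        = sc (- of_int n) (md a (n - 1) v)) \<and>
     (\<forall>k a n v. a \<in> wt_space sc (Vir md om 0) k \<longrightarrow>
        Vir md om 0 (md a n v) - md a n (Vir md om 0 v) = sc (of_int (k - n - 1)) (md a n v)) \<and>
     \<comment> \<open>grading: V = sum of L_0-eigenspaces V^(k), k \<ge> 0, finite-dimensional, V^(0) = C 1\<close>
     (\<forall>v. v \<in> module.span sc (\<Union>k::nat. wt_space sc (Vir md om 0) (int k))) \<and>
     (\<forall>k::nat. \<exists>B. finite B \<and> wt_space sc (Vir md om 0) (int k) \<subseteq> module.span sc B) \<and>
     wt_space sc (Vir md om 0) 0 = {sc c one | c. True}"

text \<open>The Li--Zamolodchikov metric: symmetric bilinear, normalised, invariant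
(mode form of the invariance identity for homogeneous c), non-degenerate.\<close>
definition is_LZ_metric ::
  "(complex \<Rightarrow> 'v::ab_group_add \<Rightarrow> 'v) \<Rightarrow> ('v \<Rightarrow> int \<Rightarrow> 'v \<Rightarrow> 'v) \<Rightarrow> 'v \<Rightarrow> 'v
     \<Rightarrow> ('v \<Rightarrow> 'v \<Rightarrow> complex) \<Rightarrow> bool" where
  "is_LZ_metric sc md one om bf \<longleftrightarrow>
     (\<forall>x y z. bf (x + y) z = bf x z + bf y z) \<and>
     (\<forall>c x y. bf (sc c x) y = c * bf x y) \<and>
     (\<forall>x y. bf x y = bf y x) \<and>
     bf one one = 1 \<and>
     (\<forall>k::nat. \<forall>c. c \<in> wt_space sc (Vir md om 0) (int k) \<longrightarrow> (\<forall>m a b.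
        bf a (md c m b) =
          (-1) ^ k * (\<Sum>j\<le>k. bf (md ((Vir md om 1 ^^ j) c) (2 * int k - int j - m - 2) a) b
                                / of_nat (fact j)))) \<and>
     (\<forall>x. (\<forall>y. bf x y = 0) \<longrightarrow> x = 0)"

definition trace_on :: "(complex \<Rightarrow> 'v::ab_group_add \<Rightarrow> 'v) \<Rightarrow> 'v set \<Rightarrow> ('v \<Rightarrow> 'v) \<Rightarrow> complex" where
  "trace_on sc W f =
     (let B = (SOME B. finite B \<and> \<not> module.dependent sc B \<and> module.span sc B = W)
      in \<Sum>u\<in>B. module.representation sc B (f u) u)"

definition killing :: "(complex \<Rightarrow> 'v::ab_group_add \<Rightarrow> 'v) \<Rightarrow> ('v \<Rightarrow> int \<Rightarrow> 'v \<Rightarrow> 'v) \<Rightarrow> 'v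
     \<Rightarrow> 'v \<Rightarrow> 'v \<Rightarrow> complex" where
  "killing sc md om a b = trace_on sc (wt_space sc (Vir md om 0) 1) (\<lambda>v. md a 0 (md b 0 v))"

text \<open>Coefficient of x^i y^j in F(a,b;x,y) = sum_alpha <a, Y(u^alpha,x) Y(u_alpha,y) b>.\<close>
definition F_coeff :: "('v \<Rightarrow> 'v \<Rightarrow> complex) \<Rightarrow> ('v \<Rightarrow> int \<Rightarrow> 'v \<Rightarrow> 'v) \<Rightarrow> nat
     \<Rightarrow> (nat \<Rightarrow> 'v) \<Rightarrow> (nat \<Rightarrow> 'v) \<Rightarrow> 'v \<Rightarrow> 'v \<Rightarrow> int \<Rightarrow> int \<Rightarrow> complex" where
  "F_coeff bf md d u ud a b i j = (\<Sum>\<alpha><d. bf a (md (ud \<alpha>) (-i-1) (md (u \<alpha>) (-j-1) b)))"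

text \<open>Coefficient of x^p y^(4-p) in G = P x^2y^2 + Q xy(x-y)^2 + R (x-y)^4.\<close>
definition G_coeff :: "complex \<Rightarrow> complex \<Rightarrow> complex \<Rightarrow> nat \<Rightarrow> complex" where
  "G_coeff P Q R p =
     (if p = 2 then P else 0)
     + (if 1 \<le> p \<and> p \<le> 3 then Q * of_nat (2 choose (p - 1)) * (-1) ^ (3 - p) else 0)
     + (if p \<le> 4 then R * of_nat (4 choose p) * (-1) ^ (4 - p) else 0)"

text \<open>Coefficient of x^i y^j in the expansion in |x|>|y| of
  (sum_{p\<le>4} g p x^p y^(4-p)) / (x^2 y^2 (x-y)^2),
using 1/(x-y)^2 = sum_{k\<ge>0} (k+1) x^(-k-2) y^k.\<close>
definition rat_expand :: "(nat \<Rightarrow> complex) \<Rightarrow> int \<Rightarrow> int \<Rightarrow> complex" where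
  "rat_expand g i j =
     (\<Sum>p\<le>4. let k = j - (2 - int p) in
        if k \<ge> 0 \<and> int p - 4 - k = i then g p * of_int (k + 1) else 0)"

end

theory Submission
  imports Defs "HOL-Library.Function_Algebras"
begin


lemma funpow_comm_gen:
  assumes "\<And>x. f (g x) = g (f x)"
  shows "f ((g ^^ n) x) = (g ^^ n) (f x)"
  by (induction n arbitrary: x) (simp_all add: assms)

lemma funpow_additive:
  fixes D :: "'f::ab_group_add \<Rightarrow> 'f"
  assumes "\<And>x y. D (x + y) = D x + D y"
  shows "(D ^^ n) (x + y) = (D ^^ n) x + (D ^^ n) y"
  by (induction n) (simp_all add: assms)

lemma additive_zero_gen:
  fixes D :: "'f::ab_group_add \<Rightarrow> 'f"
  assumes "\<And>x y. D (x + y) = D x + D y"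
  shows "D 0 = 0"
  using assms[of 0 0] by simp

lemma funpow_zero_gen:
  fixes D :: "'f::ab_group_add \<Rightarrow> 'f"
  assumes "\<And>x y. D (x + y) = D x + D y"
  shows "(D ^^ n) 0 = 0"
  by (induction n) (simp_all add: additive_zero_gen[OF assms])

lemma dong_abstract:
  fixes D1 D2 :: "'f::ab_group_add \<Rightarrow> 'f"
  assumes a1: "\<And>x y. D1 (x + y) = D1 x + D1 y"
    and a2: "\<And>x y. D2 (x + y) = D2 x + D2 y"
    and cm: "\<And>x. D1 (D2 x) = D2 (D1 x)"
  shows "(D1 ^^ A) Y = 0 \<Longrightarrow> (D2 ^^ B) (((\<lambda>x. D1 x + D2 x) ^^ C) Y) = 0
         \<Longrightarrow> (D2 ^^ (A + B + C)) Y = 0"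
proof (induction A arbitrary: C Y)
  case 0
  then show ?case using funpow_zero_gen[OF a2] by simp
next
  case (Suc A')
  note outer = Suc.IH
  let ?D3 = "\<lambda>x. D1 x + D2 x"
  have a3: "\<And>x y. ?D3 (x + y) = ?D3 x + ?D3 y" using a1 a2 by (simp add: algebra_simps)
  have c13: "\<And>x. D1 (?D3 x) = ?D3 (D1 x)" using a1 cm by simp
  have c23: "\<And>x. D2 (?D3 x) = ?D3 (D2 x)" using a2 cm by simp
  show ?case using Suc.prems
  proof (induction C arbitrary: Y)
    case 0
    then have "(D2 ^^ B) Y = 0" by simp
    have "(D2 ^^ (Suc A' + B)) Y = (D2 ^^ Suc A') ((D2 ^^ B) Y)"
      by (simp only: funpow_add o_apply)
    then have "(D2 ^^ (Suc A' + B)) Y = 0"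
      using \<open>(D2 ^^ B) Y = 0\<close> funpow_zero_gen[OF a2] additive_zero_gen[OF a2] by simp
    then show ?case by simp
  next
    case (Suc C')
    have h1: "(D1 ^^ A') (D1 Y) = 0" using Suc.prems(1) by (simp add: funpow_swap1)
    have h2: "(D2 ^^ B) ((?D3 ^^ Suc C') (D1 Y)) = 0"
    proof -
      have "(?D3 ^^ Suc C') (D1 Y) = D1 ((?D3 ^^ Suc C') Y)"
        by (rule funpow_comm_gen[symmetric]) (rule c13)
      moreover have "(D2 ^^ B) (D1 Z) = D1 ((D2 ^^ B) Z)" for Z
        by (rule funpow_comm_gen[symmetric]) (rule cm)
      ultimately show ?thesis using Suc.prems(2) additive_zero_gen[OF a1] by simp
    qed
    have r1: "(D2 ^^ (A' + B + Suc C')) (D1 Y) = 0" using outer[OF h1 h2] .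
    have h3: "(D1 ^^ Suc A') (?D3 Y) = 0"
    proof -
      have "(D1 ^^ Suc A') (?D3 Y) = ?D3 ((D1 ^^ Suc A') Y)"
        using funpow_comm_gen[of ?D3 D1 "Suc A'" Y, OF c13[symmetric]] by (rule sym)
      then show ?thesis using Suc.prems(1) additive_zero_gen[OF a3] by simp
    qed
    have h4: "(D2 ^^ B) ((?D3 ^^ C') (?D3 Y)) = 0"
    proof -
      have "(?D3 ^^ C') (?D3 Y) = (?D3 ^^ Suc C') Y" by (simp only: funpow_Suc_right o_apply)
      then show ?thesis using Suc.prems(2) by (simp only:)
    qed
    have r2: "(D2 ^^ (Suc A' + B + C')) (?D3 Y) = 0" using Suc.IH[OF h3 h4] .
    define k where "k = Suc A' + B + C'"
    have eq: "A' + B + Suc C' = k" by (simp add: k_def)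
    have sp: "(D2 ^^ k) (?D3 Y) = (D2 ^^ k) (D1 Y) + (D2 ^^ k) (D2 Y)"
      by (rule funpow_additive[OF a2])
    have z: "(D2 ^^ k) (D2 Y) = 0" using sp r1 r2 eq k_def by simp
    have "(D2 ^^ Suc k) Y = (D2 ^^ k) (D2 Y)" by (simp only: funpow_Suc_right o_apply)
    moreover have "Suc A' + B + Suc C' = Suc k" by (simp add: k_def)
    ultimately show ?case using z by (simp only:)
  qed
qed

definition dd :: "(int \<Rightarrow> int \<Rightarrow> 'a::ab_group_add) \<Rightarrow> int \<Rightarrow> int \<Rightarrow> 'a" where
  "dd g = (\<lambda>p q. g (p + 1) q - g p (q + 1))"

lemma dd_pow_shift:
  "(dd ^^ N) (\<lambda>p q. g (p + s) (q + t)) = (\<lambda>p q. (dd ^^ N) g (p + s) (q + t))"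
  by (induction N) (simp_all add: dd_def algebra_simps)

lemma dd_pow_comp:
  fixes h :: "'a::ab_group_add \<Rightarrow> 'b::ab_group_add"
  assumes "\<And>x y. h (x + y) = h x + h y"
  shows "(dd ^^ N) (\<lambda>p q. h (g p q)) = (\<lambda>p q. h ((dd ^^ N) g p q))"
proof -
  interpret additive h by standard (rule assms)
  show ?thesis by (induction N) (simp_all add: dd_def diff)
qed

lemma dd_pow_diff:
  "(dd ^^ N) (\<lambda>p q. f p q - g p q) = (\<lambda>p q. (dd ^^ N) f p q - (dd ^^ N) g p q)"
  by (induction N) (simp_all add: dd_def algebra_simps)

lemma dd_pow_sumf:
  "(dd ^^ N) (\<lambda>p q. \<Sum>k\<in>K. f k p q) = (\<lambda>p q. \<Sum>k\<in>K. (dd ^^ N) (f k) p q)"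
  by (induction N) (simp_all add: dd_def sum_subtractf)

lemma dd_pow_zero: "(dd ^^ N) (\<lambda>p q. 0) = (\<lambda>p q. 0)"
  by (induction N) (simp_all add: dd_def)

lemma dd_pow_raise:
  assumes "(dd ^^ N) g = (\<lambda>p q. 0)" and "N \<le> M"
  shows "(dd ^^ M) g = (\<lambda>p q. 0)"
proof -
  obtain j where "M = j + N" using assms(2) le_iff_add by (metis add.commute)
  then show ?thesis using assms(1) by (simp add: funpow_add dd_pow_zero)
qed

lemma dd_pow_sum_form:
  fixes sc :: "complex \<Rightarrow> 'v::ab_group_add \<Rightarrow> 'v"
  assumes "vector_space sc"
  shows "(dd ^^ N) g p q = (\<Sum>i\<le>N. sc ((-1)^i * of_nat (N choose i)) (g (p + int N - int i) (q + int i)))"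
proof -
  interpret vector_space sc by (rule assms)
  show ?thesis
  proof (induction N arbitrary: p q)
    case 0
    then show ?case by (simp add: dd_def)
  next
    case (Suc N)
    let ?c = "\<lambda>N i. ((-1::complex)^i * of_nat (N choose i))"
    have "(dd ^^ Suc N) g p q = (dd ^^ N) g (p + 1) q - (dd ^^ N) g p (q + 1)"
      by (simp add: dd_def)
    also have "\<dots> = (\<Sum>i\<le>N. sc (?c N i) (g (p + 1 + int N - int i) (q + int i)))
                  - (\<Sum>i\<le>N. sc (?c N i) (g (p + int N - int i) (q + 1 + int i)))"
      by (simp add: Suc.IH)
    also have "(\<Sum>i\<le>N. sc (?c N i) (g (p + 1 + int N - int i) (q + int i)))
        = (\<Sum>i\<le>Suc N. sc (?c N i) (g (p + 1 + int N - int i) (q + int i)))"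
      by simp
    also have "\<dots> = g (p + 1 + int N) q
        + (\<Sum>i\<le>N. sc (?c N (Suc i)) (g (p + int N - int i) (q + 1 + int i)))"
      by (subst sum.atMost_Suc_shift) (simp add: algebra_simps)
    finally have L: "(dd ^^ Suc N) g p q = g (p + 1 + int N) q
        + (\<Sum>i\<le>N. sc (?c N (Suc i)) (g (p + int N - int i) (q + 1 + int i)))
        - (\<Sum>i\<le>N. sc (?c N i) (g (p + int N - int i) (q + 1 + int i)))" .
    have R: "(\<Sum>i\<le>Suc N. sc (?c (Suc N) i) (g (p + int (Suc N) - int i) (q + int i)))
       = g (p + 1 + int N) q
        + (\<Sum>i\<le>N. sc (?c (Suc N) (Suc i)) (g (p + int N - int i) (q + 1 + int i)))"
      by (subst sum.atMost_Suc_shift) (simp add: algebra_simps)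
    have D: "(\<Sum>i\<le>N. sc (?c (Suc N) (Suc i)) (g (p + int N - int i) (q + 1 + int i)))
        = (\<Sum>i\<le>N. sc (?c N (Suc i)) (g (p + int N - int i) (q + 1 + int i)))
          - (\<Sum>i\<le>N. sc (?c N i) (g (p + int N - int i) (q + 1 + int i)))"
    proof -
      have e: "?c (Suc N) (Suc i) = ?c N (Suc i) - ?c N i" for i by (simp add: algebra_simps)
      have "sc (?c (Suc N) (Suc i)) x = sc (?c N (Suc i)) x - sc (?c N i) x" for i x
        by (simp only: e scale_left_diff_distrib)
      then show ?thesis
        by (simp only: sum_subtractf[symmetric])
    qed
    show ?case by (simp only: L R D add_diff_eq)
  qed
qed




locale voa =
  fixes sc :: "complex \<Rightarrow> 'v::ab_group_add \<Rightarrow> 'v"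
    and md :: "'v \<Rightarrow> int \<Rightarrow> 'v \<Rightarrow> 'v"
    and one om :: 'v and C :: complex
    and bf :: "'v \<Rightarrow> 'v \<Rightarrow> complex"
  assumes VOA: "is_VOA sc md one om C"
    and LZ: "is_LZ_metric sc md one om bf"
    and L1: "\<forall>v \<in> wt_space sc (Vir md om 0) 1. Vir md om 1 v = 0"
begin

abbreviation W where "W k \<equiv> wt_space sc (Vir md om 0) k"

lemma vs: "vector_space sc" by (rule VOA[unfolded is_VOA_def, THEN conjunct1, rule_format])

sublocale vs: vector_space sc by (rule vs)

lemma linR: "Vector_Spaces.linear sc sc (md a n)" by (rule VOA[unfolded is_VOA_def, THEN conjunct2, THEN conjunct1, rule_format])
lemma linL: "Vector_Spaces.linear sc sc (\<lambda>a. md a n b)" by (rule VOA[unfolded is_VOA_def, THEN conjunct2, THEN conjunct2, THEN conjunct1, rule_format])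

lemma md_add: "md a n (x + y) = md a n x + md a n y"
  using linR[of a n] unfolding Vector_Spaces.linear_iff by blast
lemma md_scale: "md a n (sc c x) = sc c (md a n x)"
  using linR[of a n] unfolding Vector_Spaces.linear_iff by blast
lemma md_addL: "md (x + y) n b = md x n b + md y n b"
  using linL[of n b] unfolding Vector_Spaces.linear_iff by blast
lemma md_scaleL: "md (sc c x) n b = sc c (md x n b)"
  using linL[of n b] unfolding Vector_Spaces.linear_iff by blast

lemma md_zero[simp]: "md a n 0 = 0"
  using additive.zero[of "md a n"] md_add by (simp add: additive_def)
lemma md_zeroL[simp]: "md 0 n b = 0"
  using additive.zero[of "\<lambda>a. md a n b"] md_addL by (simp add: additive_def)
lemma md_diff: "md a n (x - y) = md a n x - md a n y"
  using additive.diff[of "md a n"] md_add by (simp add: additive_def)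
lemma md_diffL: "md (x - y) n b = md x n b - md y n b"
  using additive.diff[of "\<lambda>a. md a n b"] md_addL by (simp add: additive_def)
lemma md_neg: "md a n (- x) = - md a n x"
  using additive.minus[of "md a n"] md_add by (simp add: additive_def)
lemma md_negL: "md (- x) n b = - md x n b"
  using additive.minus[of "\<lambda>a. md a n b"] md_addL by (simp add: additive_def)
lemma md_sum: "md a n (sum f A) = (\<Sum>x\<in>A. md a n (f x))"
  using additive.sum[of "md a n"] md_add by (simp add: additive_def)
lemma md_sumL: "md (sum f A) n b = (\<Sum>x\<in>A. md (f x) n b)"
  using additive.sum[of "\<lambda>a. md a n b"] md_addL by (simp add: additive_def)

lemma trunc: "\<exists>N. \<forall>n\<ge>N. md a n b = 0" by (rule VOA[unfolded is_VOA_def, THEN conjunct2, THEN conjunct2, THEN conjunct2, THEN conjunct1, rule_format])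
lemma vac_one: "md one n v = (if n = -1 then v else 0)" by (rule VOA[unfolded is_VOA_def, THEN conjunct2, THEN conjunct2, THEN conjunct2, THEN conjunct2, THEN conjunct1, rule_format])
lemma vac_create: "md a (-1) one = a" by (rule VOA[unfolded is_VOA_def, THEN conjunct2, THEN conjunct2, THEN conjunct2, THEN conjunct2, THEN conjunct2, THEN conjunct1, rule_format])
lemma vac_ann: "n \<ge> 0 \<Longrightarrow> md a n one = 0" by (rule VOA[unfolded is_VOA_def, THEN conjunct2, THEN conjunct2, THEN conjunct2, THEN conjunct2, THEN conjunct2, THEN conjunct2, THEN conjunct1, rule_format])

lemma locality: "\<exists>N::nat. \<forall>m n c.
        (\<Sum>i\<le>N. sc ((-1)^i * of_nat (N choose i))
           (md a (m + int N - int i) (md b (n + int i) c)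
            - md b (n + int i) (md a (m + int N - int i) c))) = 0"
  by (rule VOA[unfolded is_VOA_def, THEN conjunct2, THEN conjunct2, THEN conjunct2, THEN conjunct2, THEN conjunct2, THEN conjunct2, THEN conjunct2, THEN conjunct1, rule_format])

lemma om_wt: "om \<in> W 2" by (rule VOA[unfolded is_VOA_def, THEN conjunct2, THEN conjunct2, THEN conjunct2, THEN conjunct2, THEN conjunct2, THEN conjunct2, THEN conjunct2, THEN conjunct2, THEN conjunct1, rule_format])
lemma vir: "Vir md om m (Vir md om n v) - Vir md om n (Vir md om m v)
        = sc (of_int (m - n)) (Vir md om (m + n) v)
          + sc (if m + n = 0 then (of_int m ^ 3 - of_int m) / 12 * C else 0) v"
  by (rule VOA[unfolded is_VOA_def, THEN conjunct2, THEN conjunct2, THEN conjunct2, THEN conjunct2, THEN conjunct2, THEN conjunct2, THEN conjunct2, THEN conjunct2, THEN conjunct2, THEN conjunct1, rule_format])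
lemma Tcomm: "Vir md om (-1) (md a n v) - md a n (Vir md om (-1) v)
        = sc (- of_int n) (md a (n - 1) v)"
  by (rule VOA[unfolded is_VOA_def, THEN conjunct2, THEN conjunct2, THEN conjunct2, THEN conjunct2, THEN conjunct2, THEN conjunct2, THEN conjunct2, THEN conjunct2, THEN conjunct2, THEN conjunct2, THEN conjunct2, THEN conjunct1, rule_format])
lemma L0comm: "a \<in> W k \<Longrightarrow>
        Vir md om 0 (md a n v) - md a n (Vir md om 0 v) = sc (of_int (k - n - 1)) (md a n v)"
  by (rule VOA[unfolded is_VOA_def, THEN conjunct2, THEN conjunct2, THEN conjunct2, THEN conjunct2, THEN conjunct2, THEN conjunct2, THEN conjunct2, THEN conjunct2, THEN conjunct2, THEN conjunct2, THEN conjunct2, THEN conjunct2, THEN conjunct1, rule_format])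
lemma grading: "v \<in> vs.span (\<Union>k::nat. W (int k))"
  by (rule VOA[unfolded is_VOA_def, THEN conjunct2, THEN conjunct2, THEN conjunct2, THEN conjunct2, THEN conjunct2, THEN conjunct2, THEN conjunct2, THEN conjunct2, THEN conjunct2, THEN conjunct2, THEN conjunct2, THEN conjunct2, THEN conjunct2, THEN conjunct1, rule_format])
lemma W0: "W 0 = {sc c one | c. True}"
  by (rule VOA[unfolded is_VOA_def, THEN conjunct2, THEN conjunct2, THEN conjunct2, THEN conjunct2, THEN conjunct2, THEN conjunct2, THEN conjunct2, THEN conjunct2, THEN conjunct2, THEN conjunct2, THEN conjunct2, THEN conjunct2, THEN conjunct2, THEN conjunct2, THEN conjunct2, rule_format])

lemma bf_addL: "bf (x + y) z = bf x z + bf y z" by (rule LZ[unfolded is_LZ_metric_def, THEN conjunct1, rule_format])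
lemma bf_scaleL: "bf (sc c x) y = c * bf x y" by (rule LZ[unfolded is_LZ_metric_def, THEN conjunct2, THEN conjunct1, rule_format])
lemma bf_sym: "bf x y = bf y x" by (rule LZ[unfolded is_LZ_metric_def, THEN conjunct2, THEN conjunct2, THEN conjunct1, rule_format])
lemma bf_one: "bf one one = 1" by (rule LZ[unfolded is_LZ_metric_def, THEN conjunct2, THEN conjunct2, THEN conjunct2, THEN conjunct1, rule_format])
lemma bf_inv: "c \<in> W (int k) \<Longrightarrow>
        bf a (md c m b) =
          (-1) ^ k * (\<Sum>j\<le>k. bf (md ((Vir md om 1 ^^ j) c) (2 * int k - int j - m - 2) a) b
                                / of_nat (fact j))"
  by (rule LZ[unfolded is_LZ_metric_def, THEN conjunct2, THEN conjunct2, THEN conjunct2, THEN conjunct2, THEN conjunct1, rule_format])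
lemma bf_nondeg: "(\<And>y. bf x y = 0) \<Longrightarrow> x = 0" by (rule LZ[unfolded is_LZ_metric_def, THEN conjunct2, THEN conjunct2, THEN conjunct2, THEN conjunct2, THEN conjunct2, rule_format])

lemma bf_addR: "bf z (x + y) = bf z x + bf z y"
  by (simp only: bf_sym[of z] bf_addL)
lemma bf_scaleR: "bf y (sc c x) = c * bf y x"
  by (simp only: bf_sym[of y] bf_scaleL)
lemma bf_zeroL[simp]: "bf 0 y = 0"
  using bf_addL[of 0 0 y] by simp
lemma bf_zeroR[simp]: "bf y 0 = 0"
  using bf_addR[of y 0 0] by simp
lemma bf_diffL: "bf (x - y) z = bf x z - bf y z"
  using bf_addL[of "x - y" y z] by simp
lemma bf_diffR: "bf z (x - y) = bf z x - bf z y"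
  using bf_addR[of z "x - y" y] by simp
lemma bf_negL: "bf (- x) z = - bf x z"
  using bf_diffL[of 0 x z] by simp
lemma bf_negR: "bf z (- x) = - bf z x"
  using bf_diffR[of z 0 x] by simp
lemma bf_sumR: "bf z (sum f A) = (\<Sum>x\<in>A. bf z (f x))"
  using additive.sum[of "bf z"] bf_addR by (simp add: additive_def)
lemma bf_sumL: "bf (sum f A) z = (\<Sum>x\<in>A. bf (f x) z)"
  using additive.sum[of "\<lambda>x. bf x z"] bf_addL by (simp add: additive_def)

lemma Vir_def': "Vir md om n = md om (n + 1)" by (simp add: Vir_def)

lemma T_one: "Vir md om (-1) one = 0" by (simp add: Vir_def vac_ann)

lemma T_create: "Vir md om (-1) (md x q one) = sc (- of_int q) (md x (q - 1) one)"
  using Tcomm[of x q one] by (simp only: T_one md_zero diff_zero)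

lemma wt_mode: assumes "a \<in> W k" "v \<in> W l" shows "md a n v \<in> W (k - n - 1 + l)"
proof -
  have "Vir md om 0 (md a n v) = md a n (Vir md om 0 v) + sc (of_int (k - n - 1)) (md a n v)"
    using L0comm[OF assms(1), of n v] by (simp add: algebra_simps)
  also have "\<dots> = sc (of_int l) (md a n v) + sc (of_int (k - n - 1)) (md a n v)"
    using assms(2) by (simp add: wt_space_def md_scale)
  also have "\<dots> = sc (of_int l + of_int (k - n - 1)) (md a n v)"
    by (simp only: vs.scale_left_distrib)
  also have "\<dots> = sc (of_int (k - n - 1 + l)) (md a n v)"
    by (simp add: add.commute)
  finally show ?thesis by (simp add: wt_space_def)
qed

lemma one_wt: "one \<in> W 0"
proof -
  have "sc 1 one \<in> {sc c one | c. True}" by blast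
  then show ?thesis by (simp only: W0 vs.scale_one)
qed

lemma Vir1_om: "Vir md om 1 om = 0"
proof -
  have e: "Vir md om 1 (Vir md om (-2) one) - Vir md om (-2) (Vir md om 1 one)
        = sc (of_int (1 - (-2))) (Vir md om (1 + (-2)) one)
          + sc (if 1 + (-2) = (0::int) then (of_int 1 ^ 3 - of_int 1) / 12 * C else 0) one"
    by (rule vir)
  have a1: "Vir md om (-2) one = om" by (simp add: Vir_def vac_create)
  have a2: "Vir md om 1 one = 0" by (simp add: Vir_def vac_ann)
  have a3: "Vir md om (1 + (-2)) one = 0" using T_one by simp
  have a4: "(if 1 + (-2) = (0::int) then (of_int 1 ^ 3 - of_int 1) / 12 * C else 0) = 0" by simp
  have a5: "Vir md om (-2) 0 = 0" by (simp add: Vir_def)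
  show ?thesis using e by (simp only: a1 a2 a3 a4 a5 vs.scale_zero_right vs.scale_zero_left diff_zero add_0_right)
qed

lemma Vir1_om': "md om 2 om = 0" using Vir1_om by (simp add: Vir_def)

lemma L0_sym: "bf x (Vir md om 0 y) = bf (Vir md om 0 x) y"
proof -
  have om2: "om \<in> W (int 2)" using om_wt by simp
  have z: "(Vir md om 1 ^^ j) om = 0" if "j \<ge> 1" for j
    using that
  proof (induction j)
    case 0 then show ?case by simp
  next
    case (Suc j)
    then show ?case
      by (cases "j = 0") (simp_all add: Vir1_om' Vir_def)
  qed
  have "bf x (md om 1 y) = (-1) ^ 2 * (\<Sum>j\<le>2. bf (md ((Vir md om 1 ^^ j) om) (2 * int 2 - int j - 1 - 2) x) y
                                / of_nat (fact j))"
    by (rule bf_inv[OF om2])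
  also have "\<dots> = bf (md om 1 x) y"
  proof -
    have z1: "(Vir md om 1 ^^ 1) om = 0" using z[of 1] by simp
    have z2: "(Vir md om 1 ^^ 2) om = 0" using z[of 2] by simp
    have e: "(\<Sum>j\<le>(2::nat). F j) = F 0 + F 1 + F 2" for F :: "nat \<Rightarrow> complex"
      by (simp add: numeral_2_eq_2)
    show ?thesis
      apply (subst e)
      apply (simp only: z1 z2 md_zeroL bf_zeroL)
      apply simp
      done
  qed
  finally show ?thesis by (simp add: Vir_def)
qed

lemma orth: assumes "x \<in> W k" "y \<in> W l" "k \<noteq> l" shows "bf x y = 0"
proof -
  have "bf x (Vir md om 0 y) = of_int l * bf x y"
    using assms(2) by (simp add: wt_space_def bf_scaleR)
  moreover have "bf (Vir md om 0 x) y = of_int k * bf x y"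
    using assms(1) by (simp add: wt_space_def bf_scaleL)
  ultimately have "of_int l * bf x y = of_int k * bf x y" using L0_sym by metis
  then have "(of_int l - of_int k) * bf x y = 0" by (simp add: algebra_simps)
  moreover have "(of_int l - of_int k :: complex) \<noteq> 0" using assms(3) by simp
  ultimately show ?thesis by simp
qed

lemma neg_wt_zero: assumes "v \<in> W k" "k < 0" shows "v = 0"
proof (rule bf_nondeg)
  fix y
  have "y \<in> vs.span (\<Union>k::nat. W (int k))" by (rule grading)
  then show "bf v y = 0"
  proof (induction rule: vs.span_induct_alt)
    case base then show ?case by simp
  next
    case (step c x y)
    then obtain n :: nat where "x \<in> W (int n)" by blast
    then have "bf v x = 0" using orth[OF assms(1) \<open>x \<in> W (int n)\<close>] assms(2) by simp
    then show ?case using step by (simp add: bf_addR bf_scaleR)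
  qed
qed

lemma inv1: assumes "c \<in> W 1" shows "bf x (md c m y) = - bf (md c (- m) x) y"
proof -
  have c1: "c \<in> W (int 1)" using assms by simp
  have v: "Vir md om 1 c = 0" using L1 assms by blast
  have "bf x (md c m y) = (-1) ^ 1 * (\<Sum>j\<le>1. bf (md ((Vir md om 1 ^^ j) c) (2 * int 1 - int j - m - 2) x) y
                                / of_nat (fact j))"
    by (rule bf_inv[OF c1])
  also have "\<dots> = - (bf (md c (2 * int 1 - int 0 - m - 2) x) y / of_nat (fact 0)
         + bf (md ((Vir md om 1 ^^ 1) c) (2 * int 1 - int 1 - m - 2) x) y / of_nat (fact 1))"
  proof -
    have e: "(\<Sum>j\<le>(1::nat). F j) = F 0 + F 1" for F :: "nat \<Rightarrow> complex" by (simp add: atMost_Suc)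
    show ?thesis by (subst e) simp
  qed
  also have "\<dots> = - bf (md c (- m) x) y"
  proof -
    have v1: "(Vir md om 1 ^^ 1) c = 0" using v by (simp add: One_nat_def)
    show ?thesis by (simp only: v1 md_zeroL bf_zeroL) simp
  qed
  finally show ?thesis .
qed

lemma wt1_high: assumes "u \<in> W 1" "v \<in> W 1" "n \<ge> 2" shows "md u n v = 0"
proof -
  have "md u n v \<in> W (1 - n - 1 + 1)" by (rule wt_mode[OF assms(1,2)])
  then show ?thesis by (rule neg_wt_zero) (use assms(3) in simp)
qed

lemma wt1_one: assumes "u \<in> W 1" "v \<in> W 1" shows "md u 1 v = sc (- bf u v) one"
proof -
  have "md u 1 v \<in> W (1 - 1 - 1 + 1)" by (rule wt_mode[OF assms(1,2)])
  then obtain c where c: "md u 1 v = sc c one" using W0 by auto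
  have "bf one (md u 1 v) = - bf (md u (-1) one) v" by (rule inv1[OF assms(1)])
  then have "c = - bf u v" using c by (simp add: bf_scaleR bf_one vac_create)
  then show ?thesis using c by simp
qed

end



definition dxy :: "(int \<Rightarrow> int \<Rightarrow> int \<Rightarrow> 'a::ab_group_add) \<Rightarrow> int \<Rightarrow> int \<Rightarrow> int \<Rightarrow> 'a" where
  "dxy F = (\<lambda>p q r. F (p + 1) q r - F p (q + 1) r)"
definition dyz :: "(int \<Rightarrow> int \<Rightarrow> int \<Rightarrow> 'a::ab_group_add) \<Rightarrow> int \<Rightarrow> int \<Rightarrow> int \<Rightarrow> 'a" where
  "dyz F = (\<lambda>p q r. F p (q + 1) r - F p q (r + 1))"
definition dxz :: "(int \<Rightarrow> int \<Rightarrow> int \<Rightarrow> 'a::ab_group_add) \<Rightarrow> int \<Rightarrow> int \<Rightarrow> int \<Rightarrow> 'a" where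
  "dxz F = (\<lambda>p q r. F (p + 1) q r - F p q (r + 1))"

lemma dxy_pow: "(dxy ^^ n) F = (\<lambda>p q r. (dd ^^ n) (\<lambda>p q. F p q r) p q)"
  by (induction n) (simp_all add: dxy_def dd_def)
lemma dyz_pow: "(dyz ^^ n) F = (\<lambda>p q r. (dd ^^ n) (\<lambda>q r. F p q r) q r)"
  by (induction n) (simp_all add: dyz_def dd_def)
lemma dxz_pow: "(dxz ^^ n) F = (\<lambda>p q r. (dd ^^ n) (\<lambda>p r. F p q r) p r)"
  by (induction n) (simp_all add: dxz_def dd_def)

lemma dxy_add: "dxy (F + G) = dxy F + dxy G"
  by (simp add: dxy_def fun_eq_iff algebra_simps)
lemma dyz_add: "dyz (F + G) = dyz F + dyz G"
  by (simp add: dyz_def fun_eq_iff algebra_simps)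
lemma dxz_add: "dxz (F + G) = dxz F + dxz G"
  by (simp add: dxz_def fun_eq_iff algebra_simps)
lemma dxy_dyz: "dxy (dyz F) = dyz (dxy F)"
  by (simp add: dxy_def dyz_def fun_eq_iff algebra_simps)
lemma dxz_dyz: "dxz (dyz F) = dyz (dxz F)"
  by (simp add: dxz_def dyz_def fun_eq_iff algebra_simps)
lemma dxz_eq: "dxz = (\<lambda>F. dxy F + dyz F)"
  by (simp add: dxz_def dxy_def dyz_def fun_eq_iff algebra_simps)

lemma funpow_diff_gen:
  fixes D :: "'f::ab_group_add \<Rightarrow> 'f"
  assumes "\<And>x y. D (x + y) = D x + D y"
  shows "(D ^^ n) (x - y) = (D ^^ n) x - (D ^^ n) y"
proof -
  interpret additive "D ^^ n" by standard (rule funpow_additive[OF assms])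
  show ?thesis by (rule diff)
qed

lemma dd_pow_diff_comp:
  fixes h :: "'a::ab_group_add \<Rightarrow> 'a"
  assumes "\<And>x y. h (x + y) = h x + h y"
  shows "(dd ^^ N) (\<lambda>p q. f p q - h (g p q)) = (\<lambda>p q. (dd ^^ N) f p q - h ((dd ^^ N) g p q))"
  using dd_pow_diff[of N f "\<lambda>p q. h (g p q)"] dd_pow_comp[of h N g, OF assms] by simp

lemma dd_pow_comp_diff:
  fixes h :: "'a::ab_group_add \<Rightarrow> 'a"
  assumes "\<And>x y. h (x + y) = h x + h y"
  shows "(dd ^^ N) (\<lambda>p q. h (g p q) - f p q) = (\<lambda>p q. h ((dd ^^ N) g p q) - (dd ^^ N) f p q)"
  using dd_pow_diff[of N "\<lambda>p q. h (g p q)" f] dd_pow_comp[of h N g, OF assms] by simp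

context voa
begin

lemma loc_dd: "\<exists>N. \<forall>v. (dd ^^ N) (\<lambda>p q. md a p (md b q v) - md b q (md a p v)) = (\<lambda>p q. 0)"
proof -
  obtain N :: nat where N: "\<forall>m n c.
        (\<Sum>i\<le>N. sc ((-1)^i * of_nat (N choose i))
           (md a (m + int N - int i) (md b (n + int i) c)
            - md b (n + int i) (md a (m + int N - int i) c))) = 0"
    using locality[of a b] by blast
  show ?thesis
    by (rule exI[of _ N]) (simp add: fun_eq_iff dd_pow_sum_form[OF vs] N)
qed

lemma dong: "\<exists>M. \<forall>w p. (dd ^^ M) (\<lambda>q r.
     md a p (md b q (md c r w)) - md b q (md a p (md c r w))
     - (md c r (md a p (md b q w)) - md c r (md b q (md a p w)))) = (\<lambda>q r. 0)"
proof -
  obtain A where A: "\<forall>v. (dd ^^ A) (\<lambda>p q. md a p (md b q v) - md b q (md a p v)) = (\<lambda>p q. 0)"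
    using loc_dd[of a b] by blast
  obtain B where B: "\<forall>v. (dd ^^ B) (\<lambda>q r. md b q (md c r v) - md c r (md b q v)) = (\<lambda>p q. 0)"
    using loc_dd[of b c] by blast
  obtain Cc where Cc: "\<forall>v. (dd ^^ Cc) (\<lambda>p r. md a p (md c r v) - md c r (md a p v)) = (\<lambda>p q. 0)"
    using loc_dd[of a c] by blast
  have "\<forall>w p. (dd ^^ (A + B + Cc)) (\<lambda>q r.
     md a p (md b q (md c r w)) - md b q (md a p (md c r w))
     - (md c r (md a p (md b q w)) - md c r (md b q (md a p w)))) = (\<lambda>q r. 0)"
  proof (intro allI)
    fix w p
    define X where "X = (\<lambda>p q r.
     md a p (md b q (md c r w)) - md b q (md a p (md c r w))
     - (md c r (md a p (md b q w)) - md c r (md b q (md a p w))))"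
    define J1 where "J1 = (\<lambda>p q r. md a p (md b q (md c r w) - md c r (md b q w))
                 - (md b q (md c r (md a p w)) - md c r (md b q (md a p w))))"
    define J2 where "J2 = (\<lambda>p q r. md b q (md a p (md c r w) - md c r (md a p w))
                 - (md a p (md c r (md b q w)) - md c r (md a p (md b q w))))"
    have XJ: "X = J1 - J2"
      by (simp add: X_def J1_def J2_def fun_eq_iff md_diff algebra_simps)
    have h1: "(dxy ^^ A) X = 0"
    proof -
      have "(dd ^^ A) (\<lambda>p q. X p q r) = (\<lambda>p q. 0)" for r
      proof -
        have e: "(\<lambda>p q. X p q r) = (\<lambda>p q. (md a p (md b q (md c r w)) - md b q (md a p (md c r w)))
                  - md c r (md a p (md b q w) - md b q (md a p w)))"
          by (simp add: X_def md_diff fun_eq_iff)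
        show ?thesis
          unfolding e dd_pow_diff_comp[of "md c r" A "\<lambda>p q. md a p (md b q (md c r w)) - md b q (md a p (md c r w))"
             "\<lambda>p q. md a p (md b q w) - md b q (md a p w)", OF md_add]
          using A by simp
      qed
      then show ?thesis by (simp add: dxy_pow fun_eq_iff)
    qed
    have j1: "(dyz ^^ B) J1 = 0"
    proof -
      have "(dd ^^ B) (\<lambda>q r. J1 p q r) = (\<lambda>q r. 0)" for p
      proof -
        have e: "(\<lambda>q r. J1 p q r) = (\<lambda>q r. md a p (md b q (md c r w) - md c r (md b q w))
                 - (md b q (md c r (md a p w)) - md c r (md b q (md a p w))))"
          by (simp add: J1_def)
        show ?thesis
          unfolding e dd_pow_comp_diff[of "md a p" B "\<lambda>q r. md b q (md c r w) - md c r (md b q w)"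
             "\<lambda>q r. md b q (md c r (md a p w)) - md c r (md b q (md a p w))", OF md_add]
          using B by simp
      qed
      then show ?thesis by (simp add: dyz_pow fun_eq_iff)
    qed
    have j2: "(dxz ^^ Cc) J2 = 0"
    proof -
      have "(dd ^^ Cc) (\<lambda>p r. J2 p q r) = (\<lambda>p r. 0)" for q
      proof -
        have e: "(\<lambda>p r. J2 p q r) = (\<lambda>p r. md b q (md a p (md c r w) - md c r (md a p w))
                 - (md a p (md c r (md b q w)) - md c r (md a p (md b q w))))"
          by (simp add: J2_def)
        show ?thesis
          unfolding e dd_pow_comp_diff[of "md b q" Cc "\<lambda>p r. md a p (md c r w) - md c r (md a p w)"
             "\<lambda>p r. md a p (md c r (md b q w)) - md c r (md a p (md b q w))", OF md_add]
          using Cc by simp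
      qed
      then show ?thesis by (simp add: dxz_pow fun_eq_iff)
    qed
    have h2: "(dyz ^^ B) (((\<lambda>x. dxy x + dyz x) ^^ Cc) X) = 0"
    proof -
      have "(dxz ^^ Cc) X = (dxz ^^ Cc) J1"
        unfolding XJ funpow_diff_gen[of dxz, OF dxz_add] j2 by simp
      moreover have "(dyz ^^ B) ((dxz ^^ Cc) J1) = (dxz ^^ Cc) ((dyz ^^ B) J1)"
      proof -
        have c1: "(dxz ^^ Cc) (dyz x) = dyz ((dxz ^^ Cc) x)" for x
          by (rule funpow_comm_gen[symmetric]) (rule dxz_dyz[symmetric])
        show ?thesis by (rule funpow_comm_gen[symmetric]) (rule c1)
      qed
      ultimately show ?thesis
        using j1 funpow_zero_gen[of dxz, OF dxz_add] by (simp add: dxz_eq[symmetric])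
    qed
    have "(dyz ^^ (A + B + Cc)) X = 0"
      by (rule dong_abstract[of dxy dyz, OF dxy_add dyz_add dxy_dyz h1 h2])
    then have "(dd ^^ (A + B + Cc)) (\<lambda>q r. X p q r) = (\<lambda>q r. 0)"
      by (simp add: dyz_pow fun_eq_iff)
    then show "(dd ^^ (A + B + Cc)) (\<lambda>q r.
     md a p (md b q (md c r w)) - md b q (md a p (md c r w))
     - (md c r (md a p (md b q w)) - md c r (md b q (md a p w)))) = (\<lambda>q r. 0)"
      by (simp add: X_def)
  qed
  then show ?thesis by blast
qed

end



context voa
begin

lemma T_lin_sum: "Vir md om (-1) (\<Sum>k\<in>K. sc (f k) (g k)) = (\<Sum>k\<in>K. sc (f k) (Vir md om (-1) (g k)))"
  by (simp add: Vir_def md_sum md_scale)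

lemma coef_id:
  fixes m k :: nat and q :: int
  assumes "k \<le> m"
  shows "of_nat (m choose k) * (- of_int (int m + q - int k)) + of_nat (m * ((m - 1) choose k))
         = (- of_int q) * (of_nat (m choose k) :: complex)"
proof -
  have "(m - k) * (m choose k) = m * ((m - 1) choose k)" by (rule binomial_absorb_comp)
  then have "of_nat (m * ((m - 1) choose k)) = (of_nat m - of_nat k) * (of_nat (m choose k) :: complex)"
    using assms by (metis of_nat_diff of_nat_mult)
  then show ?thesis by (simp add: algebra_simps)
qed

lemma vac:
  fixes m r :: nat
  shows "md a (int m) (md b (-1 - int r) one)
     = (\<Sum>k\<le>m. sc (of_nat (m choose k)) (md (md a (int k) b) (int m - 1 - int r - int k) one))"
proof (induction r arbitrary: m)
  case 0
  have "(\<Sum>k\<le>m. sc (of_nat (m choose k)) (md (md a (int k) b) (int m - 1 - int 0 - int k) one))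
      = (\<Sum>k\<le>m. if k = m then md a (int m) b else 0)"
  proof (rule sum.cong)
    fix k assume "k \<in> {..m}"
    then have "k \<le> m" by simp
    show "sc (of_nat (m choose k)) (md (md a (int k) b) (int m - 1 - int 0 - int k) one)
          = (if k = m then md a (int m) b else 0)"
    proof (cases "k = m")
      case True then show ?thesis by (simp add: vac_create)
    next
      case False
      then have "int m - 1 - int 0 - int k \<ge> 0" using \<open>k \<le> m\<close> by simp
      then show ?thesis using False by (simp add: vac_ann)
    qed
  qed simp
  also have "\<dots> = md a (int m) b" by simp
  finally show ?case by (simp add: vac_create)
next
  case (Suc r)
  define q where "q = -1 - int r"
  have q0: "q \<noteq> 0" by (simp add: q_def)
  let ?t = "\<lambda>k j. md (md a (int k) b) j one"
  have IH: "md a (int m') (md b q one) = (\<Sum>k\<le>m'. sc (of_nat (m' choose k)) (?t k (int m' + q - int k)))" for m'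
    using Suc.IH[of m'] by (simp add: q_def algebra_simps)
  have idx: "-1 - int (Suc r) = q - 1" by (simp add: q_def)
  have i1: "sc (- of_int q) (md a (int m) (md b (q - 1) one)) = md a (int m) (Vir md om (-1) (md b q one))"
    by (simp add: T_create md_scale md_neg)
  have i2: "md a (int m) (Vir md om (-1) y) = Vir md om (-1) (md a (int m) y) + sc (of_int (int m)) (md a (int m - 1) y)" for y
    using Tcomm[of a "int m" y] by (simp add: algebra_simps)
  have i3: "Vir md om (-1) (md a (int m) (md b q one))
      = (\<Sum>k\<le>m. sc (of_nat (m choose k) * (- of_int (int m + q - int k))) (?t k (int m + q - 1 - int k)))"
    unfolding IH T_lin_sum
    by (simp add: T_create algebra_simps)
  have i4: "sc (of_int (int m)) (md a (int m - 1) (md b q one))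
      = (\<Sum>k\<le>m. sc (of_nat (m * ((m - 1) choose k))) (?t k (int m + q - 1 - int k)))"
  proof (cases m)
    case 0 then show ?thesis by simp
  next
    case (Suc m')
    have "sc (of_int (int m)) (md a (int m - 1) (md b q one))
        = sc (of_nat m) (\<Sum>k\<le>m'. sc (of_nat (m' choose k)) (?t k (int m' + q - int k)))"
      using IH[of m'] Suc by simp
    also have "\<dots> = (\<Sum>k\<le>m'. sc (of_nat (m * (m' choose k))) (?t k (int m + q - 1 - int k)))"
      by (simp add: vs.scale_sum_right Suc algebra_simps)
    also have "\<dots> = (\<Sum>k\<le>m. sc (of_nat (m * ((m - 1) choose k))) (?t k (int m + q - 1 - int k)))"
      using Suc by (simp add: sum.atMost_Suc binomial_eq_0)
    finally show ?thesis .
  qed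
  have "sc (- of_int q) (md a (int m) (md b (q - 1) one))
     = (\<Sum>k\<le>m. sc (of_nat (m choose k) * (- of_int (int m + q - int k)) + of_nat (m * ((m - 1) choose k)))
                 (?t k (int m + q - 1 - int k)))"
    unfolding i1 i2 i3 i4 by (simp add: vs.scale_left_distrib sum.distrib)
  also have "\<dots> = (\<Sum>k\<le>m. sc ((- of_int q) * of_nat (m choose k)) (?t k (int m + q - 1 - int k)))"
  proof (rule sum.cong[OF refl])
    fix k assume "k \<in> {..m}"
    then have km: "k \<le> m" by simp
    show "sc (of_nat (m choose k) * (- of_int (int m + q - int k)) + of_nat (m * ((m - 1) choose k)))
                 (?t k (int m + q - 1 - int k)) = sc ((- of_int q) * of_nat (m choose k)) (?t k (int m + q - 1 - int k))"
      by (simp only: coef_id[OF km])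
  qed
  also have "\<dots> = sc (- of_int q) (\<Sum>k\<le>m. sc (of_nat (m choose k)) (?t k (int m + q - 1 - int k)))"
    by (simp add: vs.scale_sum_right)
  finally have "md a (int m) (md b (q - 1) one) = (\<Sum>k\<le>m. sc (of_nat (m choose k)) (?t k (int m + q - 1 - int k)))"
    using q0 by simp
  then show ?case by (simp add: q_def algebra_simps)
qed

end



context voa
begin

lemma goddard:
  fixes A X :: "int \<Rightarrow> 'v \<Rightarrow> 'v"
  assumes lA: "(dd ^^ M) (\<lambda>q n. A q (md c n one) - md c n (A q one)) = (\<lambda>q n. 0)"
    and lX: "(dd ^^ M) (\<lambda>q n. X q (md c n one) - md c n (X q one)) = (\<lambda>q n. 0)"
    and AX1: "\<And>q. A q one = X q one"
    and A0: "\<And>q. A q 0 = 0" and X0: "\<And>q. X q 0 = 0"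
  shows "A q c = X q c"
proof -
  let ?co = "\<lambda>i. ((-1::complex)^i * of_nat (M choose i))"
  have sA: "(\<Sum>i\<le>M. sc (?co i) (A (q - int M + int M - int i) (md c (-1 + int i) one)
       - md c (-1 + int i) (A (q - int M + int M - int i) one))) = 0"
    using fun_cong[OF fun_cong[OF lA, of "q - int M"], of "-1"] dd_pow_sum_form[OF vs] by simp
  have sX: "(\<Sum>i\<le>M. sc (?co i) (X (q - int M + int M - int i) (md c (-1 + int i) one)
       - md c (-1 + int i) (X (q - int M + int M - int i) one))) = 0"
    using fun_cong[OF fun_cong[OF lX, of "q - int M"], of "-1"] dd_pow_sum_form[OF vs] by simp
  have "(\<Sum>i\<le>M. sc (?co i) (A (q - int M + int M - int i) (md c (-1 + int i) one)
       - md c (-1 + int i) (A (q - int M + int M - int i) one)))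
      - (\<Sum>i\<le>M. sc (?co i) (X (q - int M + int M - int i) (md c (-1 + int i) one)
       - md c (-1 + int i) (X (q - int M + int M - int i) one)))
      = (\<Sum>i\<le>M. if i = 0 then A q c - X q c else 0)"
    unfolding sum_subtractf[symmetric]
  proof (rule sum.cong[OF refl])
    fix i assume "i \<in> {..M}"
    show "sc (?co i) (A (q - int M + int M - int i) (md c (-1 + int i) one)
       - md c (-1 + int i) (A (q - int M + int M - int i) one))
       - sc (?co i) (X (q - int M + int M - int i) (md c (-1 + int i) one)
       - md c (-1 + int i) (X (q - int M + int M - int i) one))
       = (if i = 0 then A q c - X q c else 0)"
    proof (cases "i = 0")
      case True then show ?thesis by (simp add: vac_create AX1)
    next
      case False
      then have "-1 + int i \<ge> 0" by simp
      then have "md c (-1 + int i) one = 0" by (rule vac_ann)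
      then show ?thesis using False by (simp add: A0 X0 AX1)
    qed
  qed
  also have "\<dots> = A q c - X q c" by simp
  finally show ?thesis using sA sX by simp
qed

lemma loc_shift_sum:
  fixes m :: nat
  shows "\<exists>M. (dd ^^ M) (\<lambda>q n. (\<Sum>k\<le>m. sc (of_nat (m choose k)) (md (md a (int k) b) (int m + q - int k) (md c n one)))
         - md c n (\<Sum>k\<le>m. sc (of_nat (m choose k)) (md (md a (int k) b) (int m + q - int k) one))) = (\<lambda>q n. 0)"
proof -
  define G where "G = (\<lambda>k p q. md (md a (int k) b) p (md c q one) - md c q (md (md a (int k) b) p one))"
  have "\<forall>k. \<exists>N. \<forall>v. (dd ^^ N) (\<lambda>p q. md (md a (int k) b) p (md c q v) - md c q (md (md a (int k) b) p v)) = (\<lambda>p q. 0)"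
    using loc_dd by blast
  then have "\<exists>Nf. \<forall>k. \<forall>v. (dd ^^ Nf k) (\<lambda>p q. md (md a (int k) b) p (md c q v) - md c q (md (md a (int k) b) p v)) = (\<lambda>p q. 0)"
    by (rule choice)
  then obtain Nf where Nf0: "\<forall>k. \<forall>v. (dd ^^ Nf k) (\<lambda>p q. md (md a (int k) b) p (md c q v) - md c q (md (md a (int k) b) p v)) = (\<lambda>p q. 0)"
    by blast
  define M where "M = (\<Sum>k\<le>m. Nf k)"
  have NM: "(dd ^^ M) (G k) = (\<lambda>p q. 0)" if "k \<le> m" for k
    unfolding G_def
  proof (rule dd_pow_raise)
    show "(dd ^^ Nf k) (\<lambda>p q. md (md a (int k) b) p (md c q one) - md c q (md (md a (int k) b) p one)) = (\<lambda>p q. 0)"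
      using Nf0 by blast
    show "Nf k \<le> M" unfolding M_def using that by (intro member_le_sum) auto
  qed
  have e: "(\<lambda>q n. (\<Sum>k\<le>m. sc (of_nat (m choose k)) (md (md a (int k) b) (int m + q - int k) (md c n one)))
         - md c n (\<Sum>k\<le>m. sc (of_nat (m choose k)) (md (md a (int k) b) (int m + q - int k) one)))
      = (\<lambda>q n. \<Sum>k\<le>m. sc (of_nat (m choose k)) (G k (int m + q - int k) n))"
    unfolding G_def
    by (simp only: fun_eq_iff md_sum md_scale sum_subtractf[symmetric] vs.scale_right_diff_distrib[symmetric] simp_thms)
  have sh: "(\<lambda>q n. sc (of_nat (m choose k)) (G k (int m + q - int k) n))
         = (\<lambda>q n. sc (of_nat (m choose k)) (G k (q + (int m - int k)) (n + 0)))" for k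
    by (simp add: algebra_simps)
  have z: "(dd ^^ M) (\<lambda>q n. sc (of_nat (m choose k)) (G k (int m + q - int k) n)) = (\<lambda>q n. 0)"
    if "k \<in> {..m}" for k
  proof -
    have ad: "sc (of_nat (m choose k)) (x + y) = sc (of_nat (m choose k)) x + sc (of_nat (m choose k)) y" for x y
      by (rule vs.scale_right_distrib)
    have "(dd ^^ M) (\<lambda>q n. G k (q + (int m - int k)) (n + 0)) = (\<lambda>q n. 0)"
      unfolding dd_pow_shift using NM[of k] that by simp
    then show ?thesis
      unfolding sh dd_pow_comp[of "sc (of_nat (m choose k))", OF ad] by simp
  qed
  have "(dd ^^ M) (\<lambda>q n. \<Sum>k\<le>m. sc (of_nat (m choose k)) (G k (int m + q - int k) n)) = (\<lambda>q n. 0)"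
    unfolding dd_pow_sumf using z by (simp add: fun_eq_iff)
  then show ?thesis unfolding e by blast
qed

theorem comm_formula:
  fixes m :: nat
  shows "md a (int m) (md b q w) - md b q (md a (int m) w)
     = (\<Sum>k\<le>m. sc (of_nat (m choose k)) (md (md a (int k) b) (int m + q - int k) w))"
proof -
  define A where "A = (\<lambda>q w. md a (int m) (md b q w) - md b q (md a (int m) w))"
  define X where "X = (\<lambda>q w. \<Sum>k\<le>m. sc (of_nat (m choose k)) (md (md a (int k) b) (int m + q - int k) w))"
  obtain M1 where M1: "\<forall>w' p. (dd ^^ M1) (\<lambda>q r.
     md a p (md b q (md w r w')) - md b q (md a p (md w r w'))
     - (md w r (md a p (md b q w')) - md w r (md b q (md a p w')))) = (\<lambda>q r. 0)"
    using dong[of a b w] by blast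
  obtain M2 where M2: "(dd ^^ M2) (\<lambda>q n. X q (md w n one) - md w n (X q one)) = (\<lambda>q n. 0)"
    using loc_shift_sum[of m a b w] unfolding X_def by blast
  have lA: "(dd ^^ (M1 + M2)) (\<lambda>q n. A q (md w n one) - md w n (A q one)) = (\<lambda>q n. 0)"
  proof (rule dd_pow_raise)
    have "(\<lambda>q n. A q (md w n one) - md w n (A q one)) = (\<lambda>q r.
     md a (int m) (md b q (md w r one)) - md b q (md a (int m) (md w r one))
     - (md w r (md a (int m) (md b q one)) - md w r (md b q (md a (int m) one))))"
      by (simp add: A_def md_diff)
    then show "(dd ^^ M1) (\<lambda>q n. A q (md w n one) - md w n (A q one)) = (\<lambda>q n. 0)"
      using M1 by simp
  qed simp
  have lX: "(dd ^^ (M1 + M2)) (\<lambda>q n. X q (md w n one) - md w n (X q one)) = (\<lambda>q n. 0)"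
    by (rule dd_pow_raise[OF M2]) simp
  have AX1: "A q one = X q one" for q
  proof (cases "q \<ge> 0")
    case True
    have "A q one = 0" using True by (simp add: A_def vac_ann)
    moreover have "X q one = 0" unfolding X_def
      by (rule sum.neutral) (use True in \<open>auto simp: vac_ann\<close>)
    ultimately show ?thesis by simp
  next
    case False
    define r where "r = nat (-1 - q)"
    have r: "q = -1 - int r" using False by (simp add: r_def)
    have "A q one = md a (int m) (md b q one)" by (simp add: A_def vac_ann)
    also have "\<dots> = X q one" unfolding X_def r vac by (simp add: algebra_simps)
    finally show ?thesis .
  qed
  have "A q w = X q w"
    by (rule goddard[OF lA lX AX1]) (simp_all add: A_def X_def)
  then show ?thesis by (simp add: A_def X_def)
qed

end



context voa
begin

lemma vac_wt1:
  fixes j :: nat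
  assumes u: "u \<in> W 1" and v: "v \<in> W 1"
  shows "md v (int j) (md u (-1 - int j) one) = md v 0 u"
proof -
  have "md v (int j) (md u (-1 - int j) one)
     = (\<Sum>k\<le>j. sc (of_nat (j choose k)) (md (md v (int k) u) (int j - 1 - int j - int k) one))"
    by (rule vac)
  also have "\<dots> = (\<Sum>k\<le>j. if k = 0 then md v 0 u else 0)"
  proof (rule sum.cong[OF refl])
    fix k assume "k \<in> {..j}"
    show "sc (of_nat (j choose k)) (md (md v (int k) u) (int j - 1 - int j - int k) one)
          = (if k = 0 then md v 0 u else 0)"
    proof (cases "k = 0")
      case True then show ?thesis by (simp add: vac_create)
    next
      case False
      show ?thesis
      proof (cases "k = 1")
        case True
        have "md (md v (int k) u) (int j - 1 - int j - int k) one = 0"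
          using True wt1_one[OF v u] by (simp add: md_scaleL md_negL vac_one)
        then show ?thesis using False by simp
      next
        case False2: False
        then have "int k \<ge> 2" using False by simp
        then have "md v (int k) u = 0" by (rule wt1_high[OF v u])
        then show ?thesis using False by simp
      qed
    qed
  qed
  also have "\<dots> = md v 0 u" by simp
  finally show ?thesis .
qed

lemma skew:
  assumes u: "u \<in> W 1" and v: "v \<in> W 1"
  shows "md u 0 v = - md v 0 u"
proof -
  obtain N where N: "\<forall>c. (dd ^^ N) (\<lambda>p q. md u p (md v q c) - md v q (md u p c)) = (\<lambda>p q. 0)"
    using loc_dd[of u v] by blast
  have N': "(dd ^^ Suc N) (\<lambda>p q. md u p (md v q one) - md v q (md u p one)) = (\<lambda>p q. 0)"
    by (rule dd_pow_raise) (use N in auto)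
  let ?co = "\<lambda>i. ((-1::complex)^i * of_nat (Suc N choose i))"
  have s: "(\<Sum>i\<le>Suc N. sc (?co i) (md u (- int (Suc N) + int (Suc N) - int i) (md v (-1 + int i) one)
       - md v (-1 + int i) (md u (- int (Suc N) + int (Suc N) - int i) one))) = 0"
  proof -
    have s0: "(dd ^^ Suc N) (\<lambda>p q. md u p (md v q one) - md v q (md u p one)) (- int (Suc N)) (-1) = 0"
      by (simp only: N')
    show ?thesis using s0 unfolding dd_pow_sum_form[OF vs] by simp
  qed
  have t: "md u (- int (Suc N) + int (Suc N) - int i) (md v (-1 + int i) one)
       - md v (-1 + int i) (md u (- int (Suc N) + int (Suc N) - int i) one)
       = (if i = 0 then md u 0 v + md v 0 u else 0) - md v 0 u" for i
  proof (cases "i = 0")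
    case True then show ?thesis by (simp add: vac_create vac_ann)
  next
    case False
    then obtain j where j: "i = Suc j" by (cases i) auto
    have z: "md v (-1 + int i) one = 0" using False by (intro vac_ann) simp
    have "md v (-1 + int i) (md u (- int i) one) = md v 0 u"
      using vac_wt1[OF u v, of j] j by (simp add: algebra_simps)
    then show ?thesis using False z by simp
  qed
  have s': "(\<Sum>i\<le>Suc N. sc (?co i) ((if i = 0 then md u 0 v + md v 0 u else 0) - md v 0 u)) = 0"
    using s by (simp only: t)
  have e1: "(\<Sum>i\<le>Suc N. sc (?co i) ((if i = 0 then md u 0 v + md v 0 u else 0) - md v 0 u))
     = (\<Sum>i\<le>Suc N. sc (?co i) (if i = 0 then md u 0 v + md v 0 u else 0)) - sc (\<Sum>i\<le>Suc N. ?co i) (md v 0 u)"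
    by (simp only: vs.scale_right_diff_distrib sum_subtractf vs.scale_sum_left)
  have e2: "(\<Sum>i\<le>Suc N. ?co i) = 0" by (rule choose_alternating_sum) simp
  have e3: "sc (?co i) (if i = 0 then md u 0 v + md v 0 u else 0) = (if i = 0 then md u 0 v + md v 0 u else 0)" for i
    by simp
  have e4: "(\<Sum>i\<le>Suc N. sc (?co i) (if i = 0 then md u 0 v + md v 0 u else 0)) = md u 0 v + md v 0 u"
    by (simp only: e3 sum.delta finite_atMost) simp
  have "md u 0 v + md v 0 u = 0" using s' e1 e2 e4 by simp
  then show ?thesis by (simp add: eq_neg_iff_add_eq_0)
qed

lemma comm_wt1:
  fixes m :: nat
  assumes u: "u \<in> W 1" and v: "v \<in> W 1"
  shows "md u (int m) (md v q w) = md v q (md u (int m) w) + md (md u 0 v) (int m + q) w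
           + sc (of_nat m * (- bf u v)) (if int m + q - 1 = -1 then w else 0)"
proof -
  have "md u (int m) (md v q w) - md v q (md u (int m) w)
     = (\<Sum>k\<le>m. sc (of_nat (m choose k)) (md (md u (int k) v) (int m + q - int k) w))"
    by (rule comm_formula)
  also have "\<dots> = (\<Sum>k\<le>m. (if k = 0 then md (md u 0 v) (int m + q) w else 0)
         + (if k = 1 then sc (of_nat m * (- bf u v)) (if int m + q - 1 = -1 then w else 0) else 0))"
  proof (rule sum.cong[OF refl])
    fix k assume "k \<in> {..m}"
    show "sc (of_nat (m choose k)) (md (md u (int k) v) (int m + q - int k) w)
      = (if k = 0 then md (md u 0 v) (int m + q) w else 0)
         + (if k = 1 then sc (of_nat m * (- bf u v)) (if int m + q - 1 = -1 then w else 0) else 0)"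
    proof (cases "k = 0")
      case True then show ?thesis by simp
    next
      case False
      show ?thesis
      proof (cases "k = 1")
        case True
        then show ?thesis using wt1_one[OF u v] by (simp add: md_scaleL md_negL vac_one)
      next
        case False2: False
        then have "int k \<ge> 2" using False by simp
        then have "md u (int k) v = 0" by (rule wt1_high[OF u v])
        then show ?thesis using False False2 by simp
      qed
    qed
  qed
  also have "\<dots> = md (md u 0 v) (int m + q) w
         + sc (of_nat m * (- bf u v)) (if int m + q - 1 = -1 then w else 0)"
    by (cases m) (simp_all add: sum.distrib)
  finally show ?thesis by (simp add: algebra_simps)
qed

end



lemma G_vals: "G_coeff P Q R 0 = R" "G_coeff P Q R 1 = Q - 4 * R" "G_coeff P Q R 2 = P - 2 * Q + 6 * R"
  "G_coeff P Q R 3 = Q - 4 * R" "G_coeff P Q R 4 = R"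
  by (simp_all add: G_coeff_def eval_nat_numeral)

lemma rat_expand_eq: "rat_expand g i j = (if i = -2 - j then (\<Sum>p\<le>4. if j - 2 + int p \<ge> 0 then g p * of_int (j - 1 + int p) else 0) else 0)"
  unfolding rat_expand_def Let_def by (auto intro!: sum.cong simp: algebra_simps)

lemma sum5: "(\<Sum>p\<le>(4::nat). F p) = F 0 + F 1 + F 2 + F 3 + (F 4 :: complex)"
  by (simp add: eval_nat_numeral atMost_Suc)

locale voa_basis = voa sc md one om C bf
  for sc :: "complex \<Rightarrow> 'v::ab_group_add \<Rightarrow> 'v" and md one om C bf +
  fixes d :: nat and u ud :: "nat \<Rightarrow> 'v"
  assumes u_inj: "inj_on u {..<d}"
    and u_indep: "\<not> module.dependent sc (u ` {..<d})"
    and u_span: "module.span sc (u ` {..<d}) = wt_space sc (Vir md om 0) 1"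
    and ud_in: "\<forall>i<d. ud i \<in> wt_space sc (Vir md om 0) 1"
    and dual: "\<forall>i<d. \<forall>j<d. bf (ud i) (u j) = (if i = j then 1 else 0)"
begin

lemma u_in: "i < d \<Longrightarrow> u i \<in> W 1"
proof -
  assume "i < d"
  then have "u i \<in> u ` {..<d}" by simp
  then have "u i \<in> vs.span (u ` {..<d})" by (rule vs.span_base)
  then show ?thesis using u_span by simp
qed

lemma udW: "i < d \<Longrightarrow> ud i \<in> W 1" using ud_in by blast

lemma expansion: assumes "x \<in> W 1" shows "x = (\<Sum>\<alpha><d. sc (bf (ud \<alpha>) x) (u \<alpha>))"
proof -
  have "x \<in> vs.span (u ` {..<d})" using assms u_span by simp
  then have "x \<in> range (\<lambda>g. \<Sum>v\<in>u ` {..<d}. sc (g v) v)"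
    using vs.span_finite[of "u ` {..<d}"] by simp
  then obtain f where f: "x = (\<Sum>v\<in>u ` {..<d}. sc (f v) v)" by blast
  have fx: "x = (\<Sum>\<alpha><d. sc (f (u \<alpha>)) (u \<alpha>))"
    using f sum.reindex[OF u_inj, of "\<lambda>v. sc (f v) v"] by simp
  have coef: "bf (ud \<beta>) x = f (u \<beta>)" if "\<beta> < d" for \<beta>
  proof -
    have "bf (ud \<beta>) x = bf (ud \<beta>) (\<Sum>\<alpha><d. sc (f (u \<alpha>)) (u \<alpha>))"
      using fx by (rule arg_cong)
    also have "\<dots> = (\<Sum>\<alpha><d. f (u \<alpha>) * bf (ud \<beta>) (u \<alpha>))"
      by (simp only: bf_sumR bf_scaleR)
    also have "\<dots> = (\<Sum>\<alpha><d. if \<beta> = \<alpha> then f (u \<alpha>) else 0)"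
    proof (rule sum.cong[OF refl])
      fix \<alpha> assume "\<alpha> \<in> {..<d}"
      then have "bf (ud \<beta>) (u \<alpha>) = (if \<beta> = \<alpha> then 1 else 0)" using dual that by simp
      then show "f (u \<alpha>) * bf (ud \<beta>) (u \<alpha>) = (if \<beta> = \<alpha> then f (u \<alpha>) else 0)" by simp
    qed
    also have "\<dots> = f (u \<beta>)" using that by (simp add: sum.delta)
    finally show ?thesis .
  qed
  have "(\<Sum>\<alpha><d. sc (f (u \<alpha>)) (u \<alpha>)) = (\<Sum>\<alpha><d. sc (bf (ud \<alpha>) x) (u \<alpha>))"
    by (rule sum.cong[OF refl]) (simp add: coef)
  then show ?thesis using fx by simp
qed

lemma sym_tensor:
  fixes \<beta> :: "'v \<Rightarrow> 'v \<Rightarrow> 'w::ab_group_add" and scw :: "complex \<Rightarrow> 'w \<Rightarrow> 'w"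
  assumes mw: "module scw"
    and b1: "\<And>x y z. \<beta> (x + y) z = \<beta> x z + \<beta> y z" and b2: "\<And>c x z. \<beta> (sc c x) z = scw c (\<beta> x z)"
    and b3: "\<And>x y z. \<beta> z (x + y) = \<beta> z x + \<beta> z y" and b4: "\<And>c x z. \<beta> z (sc c x) = scw c (\<beta> z x)"
  shows "(\<Sum>\<alpha><d. \<beta> (ud \<alpha>) (u \<alpha>)) = (\<Sum>\<alpha><d. \<beta> (u \<alpha>) (ud \<alpha>))"
proof -
  interpret mw: module scw by (rule mw)
  have s1: "\<beta> (sum f A) z = (\<Sum>x\<in>A. \<beta> (f x) z)" for f :: "nat \<Rightarrow> 'v" and A z
    using additive.sum[of "\<lambda>x. \<beta> x z"] b1 by (simp add: additive_def)
  have s2: "\<beta> z (sum f A) = (\<Sum>x\<in>A. \<beta> z (f x))" for f :: "nat \<Rightarrow> 'v" and A z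
    using additive.sum[of "\<beta> z"] b3 by (simp add: additive_def)
  have "(\<Sum>\<alpha><d. \<beta> (ud \<alpha>) (u \<alpha>)) = (\<Sum>\<alpha><d. \<Sum>\<gamma><d. scw (bf (ud \<gamma>) (ud \<alpha>)) (\<beta> (u \<gamma>) (u \<alpha>)))"
  proof (rule sum.cong[OF refl])
    fix \<alpha> assume "\<alpha> \<in> {..<d}"
    then have e: "ud \<alpha> = (\<Sum>\<gamma><d. sc (bf (ud \<gamma>) (ud \<alpha>)) (u \<gamma>))" using expansion udW by simp
    have "\<beta> (ud \<alpha>) (u \<alpha>) = \<beta> (\<Sum>\<gamma><d. sc (bf (ud \<gamma>) (ud \<alpha>)) (u \<gamma>)) (u \<alpha>)"
      by (rule arg_cong[where f = "\<lambda>x. \<beta> x (u \<alpha>)", OF e])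
    also have "\<dots> = (\<Sum>\<gamma><d. \<beta> (sc (bf (ud \<gamma>) (ud \<alpha>)) (u \<gamma>)) (u \<alpha>))" by (rule s1)
    finally show "\<beta> (ud \<alpha>) (u \<alpha>) = (\<Sum>\<gamma><d. scw (bf (ud \<gamma>) (ud \<alpha>)) (\<beta> (u \<gamma>) (u \<alpha>)))"
      by (simp only: b2)
  qed
  also have "\<dots> = (\<Sum>\<gamma><d. \<Sum>\<alpha><d. scw (bf (ud \<alpha>) (ud \<gamma>)) (\<beta> (u \<gamma>) (u \<alpha>)))"
    by (subst sum.swap) (simp only: bf_sym[of "ud _" "ud _"])
  also have "\<dots> = (\<Sum>\<gamma><d. \<beta> (u \<gamma>) (ud \<gamma>))"
  proof (rule sum.cong[OF refl])
    fix \<gamma> assume "\<gamma> \<in> {..<d}"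
    then have e: "ud \<gamma> = (\<Sum>\<alpha><d. sc (bf (ud \<alpha>) (ud \<gamma>)) (u \<alpha>))" using expansion udW by simp
    have "\<beta> (u \<gamma>) (ud \<gamma>) = \<beta> (u \<gamma>) (\<Sum>\<alpha><d. sc (bf (ud \<alpha>) (ud \<gamma>)) (u \<alpha>))"
      by (rule arg_cong[where f = "\<lambda>x. \<beta> (u \<gamma>) x", OF e])
    also have "\<dots> = (\<Sum>\<alpha><d. \<beta> (u \<gamma>) (sc (bf (ud \<alpha>) (ud \<gamma>)) (u \<alpha>)))" by (rule s2)
    finally show "(\<Sum>\<alpha><d. scw (bf (ud \<alpha>) (ud \<gamma>)) (\<beta> (u \<gamma>) (u \<alpha>))) = \<beta> (u \<gamma>) (ud \<gamma>)"
      by (simp only: b4)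
  qed
  finally show ?thesis .
qed

lemma module_sc: "module sc" using vs by (simp add: module_iff_vector_space)

lemma module_complex: "module ((*) :: complex \<Rightarrow> complex \<Rightarrow> complex)"
  by unfold_locales (simp_all add: algebra_simps)

lemma casimir0: "(\<Sum>\<alpha><d. md (ud \<alpha>) 0 (u \<alpha>)) = 0"
proof -
  have "(\<Sum>\<alpha><d. md (ud \<alpha>) 0 (u \<alpha>)) = (\<Sum>\<alpha><d. md (u \<alpha>) 0 (ud \<alpha>))"
    by (rule sym_tensor[OF module_sc]) (simp_all add: md_add md_addL md_scale md_scaleL)
  also have "\<dots> = - (\<Sum>\<alpha><d. md (ud \<alpha>) 0 (u \<alpha>))"
    unfolding sum_negf[symmetric] by (rule sum.cong[OF refl]) (simp add: skew[OF u_in udW])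
  finally have "(\<Sum>\<alpha><d. md (ud \<alpha>) 0 (u \<alpha>)) + (\<Sum>\<alpha><d. md (ud \<alpha>) 0 (u \<alpha>)) = 0"
    by (simp add: eq_neg_iff_add_eq_0)
  then have "sc 2 (\<Sum>\<alpha><d. md (ud \<alpha>) 0 (u \<alpha>)) = 0"
    using vs.scale_left_distrib[of 1 1 "\<Sum>\<alpha><d. md (ud \<alpha>) 0 (u \<alpha>)"] by simp
  then show ?thesis by simp
qed

lemma trace_eq:
  assumes fadd: "\<And>x y. f (x + y) = f x + f y" and fsc: "\<And>c x. f (sc c x) = sc c (f x)"
    and fW: "\<And>x. x \<in> W 1 \<Longrightarrow> f x \<in> W 1"
  shows "trace_on sc (W 1) f = (\<Sum>\<alpha><d. bf (ud \<alpha>) (f (u \<alpha>)))"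
proof -
  let ?P = "\<lambda>B. finite B \<and> \<not> vs.dependent B \<and> vs.span B = W 1"
  have "?P (u ` {..<d})" using u_indep u_span by simp
  then have PB: "?P (SOME B. ?P B)" by (rule someI)
  define B where "B = (SOME B. ?P B)"
  have fin: "finite B" and ind: "\<not> vs.dependent B" and sp: "vs.span B = W 1" using PB by (simp_all add: B_def)
  have fsum: "f (sum g A) = (\<Sum>x\<in>A. f (g x))" for g :: "'v \<Rightarrow> 'v" and A
    using additive.sum[of f] fadd by (simp add: additive_def)
  have BW: "x \<in> B \<Longrightarrow> x \<in> W 1" for x using sp vs.span_superset by blast
  have uB: "\<alpha> < d \<Longrightarrow> u \<alpha> \<in> vs.span B" for \<alpha> using sp u_in by simp
  have rep: "vs.representation B (f x) x = (\<Sum>\<alpha><d. bf (ud \<alpha>) (f x) * vs.representation B (u \<alpha>) x)"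
    if "x \<in> B" for x
  proof -
    have fxW: "f x \<in> W 1" using fW BW that by blast
    have "vs.representation B (f x) = vs.representation B (\<Sum>\<alpha><d. sc (bf (ud \<alpha>) (f x)) (u \<alpha>))"
      using expansion[OF fxW] by simp
    also have "\<dots> = (\<lambda>b. \<Sum>\<alpha><d. vs.representation B (sc (bf (ud \<alpha>) (f x)) (u \<alpha>)) b)"
      by (rule vs.representation_sum[OF ind]) (simp add: vs.span_scale uB)
    also have "\<dots> = (\<lambda>b. \<Sum>\<alpha><d. bf (ud \<alpha>) (f x) * vs.representation B (u \<alpha>) b)"
      by (simp add: vs.representation_scale[OF ind] uB)
    finally show ?thesis by simp
  qed
  have "trace_on sc (W 1) f = (\<Sum>x\<in>B. vs.representation B (f x) x)"
    unfolding trace_on_def B_def Let_def by simp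
  also have "\<dots> = (\<Sum>x\<in>B. \<Sum>\<alpha><d. bf (ud \<alpha>) (f x) * vs.representation B (u \<alpha>) x)"
    by (rule sum.cong) (simp_all add: rep)
  also have "\<dots> = (\<Sum>\<alpha><d. bf (ud \<alpha>) (\<Sum>x\<in>B. sc (vs.representation B (u \<alpha>) x) (f x)))"
    by (subst sum.swap) (simp add: bf_sumR bf_scaleR mult.commute)
  also have "\<dots> = (\<Sum>\<alpha><d. bf (ud \<alpha>) (f (u \<alpha>)))"
  proof (rule sum.cong[OF refl])
    fix \<alpha> assume "\<alpha> \<in> {..<d}"
    then have "(\<Sum>x\<in>B. sc (vs.representation B (u \<alpha>) x) x) = u \<alpha>"
      using vs.sum_representation_eq[OF ind uB fin] by simp
    then have "(\<Sum>x\<in>B. sc (vs.representation B (u \<alpha>) x) (f x)) = f (u \<alpha>)"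
      using fsum[of "\<lambda>x. sc (vs.representation B (u \<alpha>) x) x" B] by (simp add: fsc)
    then show "bf (ud \<alpha>) (\<Sum>x\<in>B. sc (vs.representation B (u \<alpha>) x) (f x)) = bf (ud \<alpha>) (f (u \<alpha>))"
      by simp
  qed
  finally show ?thesis .
qed

end



context voa_basis
begin

lemma dual1: "\<alpha> < d \<Longrightarrow> bf (ud \<alpha>) (u \<alpha>) = 1" using dual by simp

lemma sum_bf_exp: assumes "b \<in> W 1"
  shows "(\<Sum>\<alpha><d. bf (ud \<alpha>) b * bf a (u \<alpha>)) = bf a b"
proof -
  have "bf a b = bf a (\<Sum>\<alpha><d. sc (bf (ud \<alpha>) b) (u \<alpha>))"
    using expansion[OF assms] by (rule arg_cong)
  also have "\<dots> = (\<Sum>\<alpha><d. bf (ud \<alpha>) b * bf a (u \<alpha>))"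
    by (simp only: bf_sumR bf_scaleR)
  finally show ?thesis by simp
qed

lemma sum_bf_exp2: assumes "b \<in> W 1"
  shows "(\<Sum>\<alpha><d. bf (u \<alpha>) b * bf a (ud \<alpha>)) = bf a b"
proof -
  have "(\<Sum>\<alpha><d. bf (ud \<alpha>) b * bf a (u \<alpha>)) = (\<Sum>\<alpha><d. bf (u \<alpha>) b * bf a (ud \<alpha>))"
    by (rule sym_tensor[OF module_complex, of "\<lambda>x y. bf x b * bf a y"])
       (simp_all add: bf_addL bf_addR bf_scaleL bf_scaleR algebra_simps)
  then show ?thesis using sum_bf_exp[OF assms] by simp
qed

lemma killing_eq: assumes a: "a \<in> W 1" and b: "b \<in> W 1"
  shows "killing sc md om a b = (\<Sum>\<alpha><d. bf a (md (ud \<alpha>) 0 (md (u \<alpha>) 0 b)))"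
proof -
  have "killing sc md om a b = (\<Sum>\<alpha><d. bf (ud \<alpha>) (md a 0 (md b 0 (u \<alpha>))))"
    unfolding killing_def
  proof (rule trace_eq)
    fix x assume "x \<in> W 1"
    then have "md b 0 x \<in> W (1 - 0 - 1 + 1)" by (rule wt_mode[OF b])
    then have "md b 0 x \<in> W 1" by simp
    then have "md a 0 (md b 0 x) \<in> W (1 - 0 - 1 + 1)" by (rule wt_mode[OF a])
    then show "md a 0 (md b 0 x) \<in> W 1" by simp
  qed (simp_all add: md_add md_scale)
  also have "\<dots> = (\<Sum>\<alpha><d. bf a (md (ud \<alpha>) 0 (md (u \<alpha>) 0 b)))"
  proof (rule sum.cong[OF refl])
    fix \<alpha> assume "\<alpha> \<in> {..<d}"
    then have ua: "u \<alpha> \<in> W 1" and uda: "ud \<alpha> \<in> W 1" by (simp_all add: u_in udW)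
    have "bf a (md (ud \<alpha>) 0 (md (u \<alpha>) 0 b)) = - bf (md (ud \<alpha>) (- 0) a) (md (u \<alpha>) 0 b)"
      by (rule inv1[OF uda])
    also have "\<dots> = - bf (md a 0 (ud \<alpha>)) (md b 0 (u \<alpha>))"
      by (simp add: skew[OF uda a] skew[OF ua b] bf_negL bf_negR)
    also have "\<dots> = - bf (md b 0 (u \<alpha>)) (md a 0 (ud \<alpha>))" by (simp only: bf_sym)
    also have "\<dots> = bf (md a (- 0) (md b 0 (u \<alpha>))) (ud \<alpha>)"
      by (simp only: inv1[OF a] minus_minus)
    also have "\<dots> = bf (ud \<alpha>) (md a 0 (md b 0 (u \<alpha>)))" by (simp add: bf_sym)
    finally show "bf (ud \<alpha>) (md a 0 (md b 0 (u \<alpha>))) = bf a (md (ud \<alpha>) 0 (md (u \<alpha>) 0 b))" by simp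
  qed
  finally show ?thesis .
qed

end



context voa_basis
begin

lemma main:
  assumes a: "a \<in> W 1" and b: "b \<in> W 1"
  shows "F_coeff bf md d u ud a b i j
           = rat_expand (G_coeff (- of_nat d * bf a b)
                                 (killing sc md om a b - 2 * bf a b)
                                 (- bf a b)) i j"
proof -
  define B where "B = bf a b"
  define K where "K = killing sc md om a b"
  define g where "g = G_coeff (- of_nat d * B) (K - 2 * B) (- B)"
  have gv: "g 0 = - B" "g 1 = K - 2 * B - 4 * (- B)" "g 2 = - of_nat d * B - 2 * (K - 2 * B) + 6 * (- B)"
    "g 3 = K - 2 * B - 4 * (- B)" "g 4 = - B"
    unfolding g_def by (simp_all only: G_vals)
  have gS: "g (Suc 0) = K - 2 * B - 4 * (- B)" using gv(2) by simp
  have F: "F_coeff bf md d u ud a b i j = (\<Sum>\<alpha><d. bf a (md (ud \<alpha>) (-i-1) (md (u \<alpha>) (-j-1) b)))"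
    by (simp add: F_coeff_def)
  have RE: "rat_expand g i j = (if i = -2 - j then (\<Sum>p\<le>4. if j - 2 + int p \<ge> 0 then g p * of_int (j - 1 + int p) else 0) else 0)"
    by (rule rat_expand_eq)
  have goal: "F_coeff bf md d u ud a b i j = rat_expand g i j"
  proof (cases "i = -2 - j")
    case False
    have "bf a (md (ud \<alpha>) (-i-1) (md (u \<alpha>) (-j-1) b)) = 0" if "\<alpha> < d" for \<alpha>
    proof -
      have w1: "md (u \<alpha>) (-j-1) b \<in> W (1 - (-j-1) - 1 + 1)" by (rule wt_mode[OF u_in[OF that] b])
      have w2: "md (ud \<alpha>) (-i-1) (md (u \<alpha>) (-j-1) b) \<in> W (1 - (-i-1) - 1 + (1 - (-j-1) - 1 + 1))"
        by (rule wt_mode[OF udW[OF that] w1])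
      show ?thesis by (rule orth[OF a w2]) (use False in simp)
    qed
    then show ?thesis unfolding F RE using False by simp
  next
    case True
    then have i: "i = -2 - j" .
    consider (lo) "j \<le> -3" | (m2) "j = -2" | (m1) "j = -1" | (z) "j = 0" | (hi) "j \<ge> 1" by linarith
    then show ?thesis
    proof cases
      case lo
      have "md (u \<alpha>) (-j-1) b = 0" if "\<alpha> < d" for \<alpha>
        by (rule wt1_high[OF u_in[OF that] b]) (use lo in simp)
      then have L: "F_coeff bf md d u ud a b i j = 0" unfolding F by simp
      have "(\<Sum>p\<le>4. if j - 2 + int p \<ge> 0 then g p * of_int (j - 1 + int p) else 0) = 0"
        by (rule sum.neutral) (use lo in auto)
      then show ?thesis unfolding L RE using i by simp
    next
      case m2
      have "(\<Sum>\<alpha><d. bf a (md (ud \<alpha>) (-i-1) (md (u \<alpha>) (-j-1) b)))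
          = (\<Sum>\<alpha><d. - (bf (u \<alpha>) b * bf a (ud \<alpha>)))"
      proof (rule sum.cong[OF refl])
        fix \<alpha> assume "\<alpha> \<in> {..<d}"
        then have ua: "u \<alpha> \<in> W 1" by (simp add: u_in)
        have "md (u \<alpha>) (-j-1) b = sc (- bf (u \<alpha>) b) one" using wt1_one[OF ua b] m2 by simp
        then show "bf a (md (ud \<alpha>) (-i-1) (md (u \<alpha>) (-j-1) b)) = - (bf (u \<alpha>) b * bf a (ud \<alpha>))"
          using i m2 by (simp add: md_scale md_neg vac_create bf_negR bf_scaleR)
      qed
      also have "\<dots> = - B" unfolding B_def by (simp add: sum_negf sum_bf_exp2[OF b])
      finally have L: "F_coeff bf md d u ud a b i j = - B" unfolding F .
      show ?thesis unfolding L RE using i m2 by (simp add: sum5 gv)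
    next
      case m1
      have "F_coeff bf md d u ud a b i j = K"
        unfolding F K_def killing_eq[OF a b] using i m1 by simp
      then show ?thesis unfolding RE using i m1 by (simp add: sum5 gv algebra_simps)
    next
      case z
      have L: "F_coeff bf md d u ud a b i j = - B - of_nat d * B"
      proof -
        have "(\<Sum>\<alpha><d. bf a (md (ud \<alpha>) (-i-1) (md (u \<alpha>) (-j-1) b)))
          = (\<Sum>\<alpha><d. - (bf (ud \<alpha>) b * bf a (u \<alpha>)) + bf a (md (md (ud \<alpha>) 0 (u \<alpha>)) 0 b) - B)"
        proof (rule sum.cong[OF refl])
          fix \<alpha> assume "\<alpha> \<in> {..<d}"
          then have ua: "u \<alpha> \<in> W 1" and uda: "ud \<alpha> \<in> W 1" and du: "bf (ud \<alpha>) (u \<alpha>) = 1"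
            by (simp_all add: u_in udW dual1)
          have c: "md (ud \<alpha>) (int 1) (md (u \<alpha>) (- int 1) b) = md (u \<alpha>) (- int 1) (md (ud \<alpha>) (int 1) b)
             + md (md (ud \<alpha>) 0 (u \<alpha>)) (int 1 + - int 1) b
             + sc (of_nat 1 * (- bf (ud \<alpha>) (u \<alpha>))) (if int 1 + - int 1 - 1 = -1 then b else 0)"
            by (rule comm_wt1[OF uda ua])
          have o: "md (ud \<alpha>) 1 b = sc (- bf (ud \<alpha>) b) one" by (rule wt1_one[OF uda b])
          have "md (ud \<alpha>) (-i-1) (md (u \<alpha>) (-j-1) b) = sc (- bf (ud \<alpha>) b) (u \<alpha>) + md (md (ud \<alpha>) 0 (u \<alpha>)) 0 b - b"
            using c i z du o by (simp add: md_scale md_neg vac_create)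
          then show "bf a (md (ud \<alpha>) (-i-1) (md (u \<alpha>) (-j-1) b)) = - (bf (ud \<alpha>) b * bf a (u \<alpha>)) + bf a (md (md (ud \<alpha>) 0 (u \<alpha>)) 0 b) - B"
            by (simp add: bf_addR bf_diffR bf_scaleR B_def)
        qed
        also have "\<dots> = - (\<Sum>\<alpha><d. bf (ud \<alpha>) b * bf a (u \<alpha>)) + bf a (md (\<Sum>\<alpha><d. md (ud \<alpha>) 0 (u \<alpha>)) 0 b) - of_nat d * B"
          by (simp add: sum.distrib sum_subtractf sum_negf md_sumL bf_sumR)
        also have "\<dots> = - B - of_nat d * B"
          by (simp add: casimir0 sum_bf_exp[OF b] B_def)
        finally show ?thesis unfolding F .
      qed
      show ?thesis unfolding L RE using i z by (simp add: sum5 gv algebra_simps)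
    next
      case hi
      define m where "m = nat (j + 1)"
      have mj: "int m = j + 1" using hi by (simp add: m_def)
      have m2: "int m \<ge> 2" using hi mj by simp
      have L: "F_coeff bf md d u ud a b i j = - (of_int (j + 1) * of_nat d * B)"
      proof -
        have "(\<Sum>\<alpha><d. bf a (md (ud \<alpha>) (-i-1) (md (u \<alpha>) (-j-1) b)))
          = (\<Sum>\<alpha><d. bf a (md (md (ud \<alpha>) 0 (u \<alpha>)) 0 b) - of_int (j + 1) * B)"
        proof (rule sum.cong[OF refl])
          fix \<alpha> assume "\<alpha> \<in> {..<d}"
          then have ua: "u \<alpha> \<in> W 1" and uda: "ud \<alpha> \<in> W 1" and du: "bf (ud \<alpha>) (u \<alpha>) = 1"
            by (simp_all add: u_in udW dual1)
          have c: "md (ud \<alpha>) (int m) (md (u \<alpha>) (- int m) b) = md (u \<alpha>) (- int m) (md (ud \<alpha>) (int m) b)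
             + md (md (ud \<alpha>) 0 (u \<alpha>)) (int m + - int m) b
             + sc (of_nat m * (- bf (ud \<alpha>) (u \<alpha>))) (if int m + - int m - 1 = -1 then b else 0)"
            by (rule comm_wt1[OF uda ua])
          have o: "md (ud \<alpha>) (int m) b = 0" by (rule wt1_high[OF uda b m2])
          have e1: "-i-1 = int m" "-j-1 = - int m" using i mj by simp_all
          have e2: "(of_nat m :: complex) = of_int (j + 1)" using mj by (metis of_int_of_nat_eq)
          have "md (ud \<alpha>) (-i-1) (md (u \<alpha>) (-j-1) b) = md (md (ud \<alpha>) 0 (u \<alpha>)) 0 b - sc (of_int (j + 1)) b"
          proof -
            have ee: "(- complex_of_int j - 1) = - (complex_of_int j + 1)" by simp
            have neg: "sc (- complex_of_int j - 1) b = - sc (complex_of_int j + 1) b"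
              by (simp only: ee vs.scale_minus_left)
            show ?thesis unfolding e1 c o using du e2 neg by simp
          qed
          then show "bf a (md (ud \<alpha>) (-i-1) (md (u \<alpha>) (-j-1) b)) = bf a (md (md (ud \<alpha>) 0 (u \<alpha>)) 0 b) - of_int (j + 1) * B"
            by (simp add: bf_diffR bf_scaleR B_def)
        qed
        also have "\<dots> = bf a (md (\<Sum>\<alpha><d. md (ud \<alpha>) 0 (u \<alpha>)) 0 b) - of_nat d * (of_int (j + 1) * B)"
          by (simp add: sum_subtractf md_sumL bf_sumR)
        also have "\<dots> = - (of_int (j + 1) * of_nat d * B)"
          by (simp add: casimir0)
        finally show ?thesis unfolding F .
      qed
      have "(\<Sum>p\<le>4. if j - 2 + int p \<ge> 0 then g p * of_int (j - 1 + int p) else 0)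
          = (\<Sum>p\<le>4. g p * of_int (j - 1 + int p))"
      proof (rule sum.cong[OF refl])
        fix p :: nat assume "p \<in> {..4}"
        show "(if j - 2 + int p \<ge> 0 then g p * of_int (j - 1 + int p) else 0) = g p * of_int (j - 1 + int p)"
        proof (cases "j - 2 + int p \<ge> 0")
          case False
          then have "j - 1 + int p = 0" using hi by simp
          then show ?thesis using False by simp
        qed simp
      qed
      also have "\<dots> = - (of_int (j + 1) * of_nat d * B)"
        by (simp add: sum5 gv gS algebra_simps)
      finally show ?thesis unfolding L RE using i by simp
    qed
  qed
  then show ?thesis unfolding g_def B_def K_def .
qed

end

theorem proposition2:
  fixes sc :: "complex \<Rightarrow> 'v::ab_group_add \<Rightarrow> 'v"
    and md :: "'v \<Rightarrow> int \<Rightarrow> 'v \<Rightarrow> 'v"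
    and one om :: 'v and C :: complex
    and bf :: "'v \<Rightarrow> 'v \<Rightarrow> complex"
    and d :: nat and u ud :: "nat \<Rightarrow> 'v" and a b :: 'v
  assumes VOA: "is_VOA sc md one om C"
    and LZ: "is_LZ_metric sc md one om bf"
    and L1: "\<forall>v \<in> wt_space sc (Vir md om 0) 1. Vir md om 1 v = 0"
    and d_pos: "d > 0"
    and u_inj: "inj_on u {..<d}"
    and u_indep: "\<not> module.dependent sc (u ` {..<d})"
    and u_span: "module.span sc (u ` {..<d}) = wt_space sc (Vir md om 0) 1"
    and ud_in: "\<forall>i<d. ud i \<in> wt_space sc (Vir md om 0) 1"
    and dual: "\<forall>i<d. \<forall>j<d. bf (ud i) (u j) = (if i = j then 1 else 0)"
    and a_in: "a \<in> wt_space sc (Vir md om 0) 1"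
    and b_in: "b \<in> wt_space sc (Vir md om 0) 1"
  shows "\<forall>i j. F_coeff bf md d u ud a b i j
           = rat_expand (G_coeff (- of_nat d * bf a b)
                                 (killing sc md om a b - 2 * bf a b)
                                 (- bf a b)) i j"
proof -
  have "voa_basis sc md one om C bf d u ud"
    by (intro voa_basis.intro voa.intro voa_basis_axioms.intro VOA LZ L1 u_inj u_indep u_span ud_in dual)
  then interpret voa_basis sc md one om C bf d u ud .
  show ?thesis using main[OF a_in b_in] by blast
qed

end
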